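(* Let $\Lambda\subseteq\mathbb Z$ (a finite chain $\{0,\dots,L-1\}$ or $\mathbb Z$) and let $H$ be a bounded self-adjoint operator on $\ell^2(\Lambda)\otimes\mathbb C^2$ such that $\sup_{x}\sum_{x'}\|H_{x,x'}\|e^{|x-x'|/d}\le K_d$ for some $d,K_d>0$. Let $f:\mathbb R\to\mathbb R$ be bounded with Fourier transform $\hat f$ (so that $f(E)=\frac1{2\pi}\int_{\mathbb R}\hat f(\omega)e^{i\omega E}\,d\omega$), and suppose there exist $\beta>0$, $C_\beta>0$ with $|\hat f(\omega)\,\omega|\le C_\beta e^{-\beta|\omega|}$ for all $\omega\in\mathbb R$. Then for all sites $x,y$, $$\|f(H)_{x,y}\|\le 4\Big(\|f\|_\infty+\frac{C_\beta K_d}{\beta}+C_\beta\frac{|x-y|}{d}\Big)e^{-|x-y|/d'},\qquad d'=d\max(1,K_d/\beta),$$ where $\|f\|_\infty=\sup_{E\in\mathbb R}|f(E)|$.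
   Context: $T_{x,y}$ denotes the $2\times2$ matrix block of an operator $T$ between sites $x$ and $y$, and $\|\cdot\|$ is the operator norm. $f(H)$ is defined by the Weyl functional calculus $f(H)=\frac1{2\pi}\int_{\mathbb R}\hat f(\omega)e^{i\omega H}d\omega$, which coincides with the spectral definition. *)

theory Defs
  imports "HOL-Analysis.Analysis"
begin

text \<open>An operator on ell2(Lambda) tensor C^2 is represented by its 2x2 block kernel
  H x y :: complex^2^2 (x, y sites in Lambda, a subset of the integers).\<close>

type_synonym block = "complex^2^2"

definition blk_norm :: "block \<Rightarrow> real" where
  "blk_norm A = onorm (\<lambda>v::complex^2. A *v v)"

definition blk_adj :: "block \<Rightarrow> block" where
  "blk_adj A = (\<chi> i j. cnj (A $ j $ i))"

fun ker_pow :: "int set \<Rightarrow> (int \<Rightarrow> int \<Rightarrow> block) \<Rightarrow> nat \<Rightarrow> int \<Rightarrow> int \<Rightarrow> block" where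
  "ker_pow Lam H 0 x y = (if x = y then mat 1 else 0)"
| "ker_pow Lam H (Suc n) x y = (\<Sum>\<^sub>\<infinity>z\<in>Lam. H x z ** ker_pow Lam H n z y)"

definition ker_exp :: "int set \<Rightarrow> (int \<Rightarrow> int \<Rightarrow> block) \<Rightarrow> real \<Rightarrow> int \<Rightarrow> int \<Rightarrow> block" where
  "ker_exp Lam H w x y =
     (\<chi> i j. (\<Sum>n. ((\<i> * complex_of_real w) ^ n / of_nat (fact n)) * (ker_pow Lam H n x y $ i $ j)))"

definition pv_integral :: "(real \<Rightarrow> complex) \<Rightarrow> complex" where
  "pv_integral g = Lim (at_right 0) (\<lambda>\<epsilon>. LINT w:{w. \<epsilon> \<le> \<bar>w\<bar>}|lborel. g w)"

text \<open>Weyl functional calculus: f(H) = (1/2pi) int fhat(w) exp(i w H) dw, blockwise.\<close>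
definition weyl_calc :: "(real \<Rightarrow> complex) \<Rightarrow> int set \<Rightarrow> (int \<Rightarrow> int \<Rightarrow> block) \<Rightarrow> int \<Rightarrow> int \<Rightarrow> block" where
  "weyl_calc fhat Lam H x y =
     (\<chi> i j. pv_integral (\<lambda>w. fhat w * ker_exp Lam H w x y $ i $ j) / complex_of_real (2 * pi))"

end

theory Submission
  imports Defs
begin

lemma blk_bl: "bounded_linear (\<lambda>v::complex^2. A *v v)"
  by (simp add: linear_conv_bounded_linear)

lemma blk_norm_nonneg: "0 \<le> blk_norm A"
  unfolding blk_norm_def by (rule onorm_pos_le[OF blk_bl])

lemma blk_apply: "norm (A *v v) \<le> blk_norm A * norm v"
  unfolding blk_norm_def by (rule onorm[OF blk_bl])

lemma norm_axis_c: "norm (axis j (1::complex)) = 1"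
proof -
  have "norm (axis j (1::complex)) = sqrt (\<Sum>i\<in>UNIV. (norm (axis j (1::complex) $ i))\<^sup>2)"
    by (simp add: norm_vec_def L2_set_def)
  also have "(\<Sum>i\<in>UNIV. (norm (axis j (1::complex) $ i))\<^sup>2) = (\<Sum>i\<in>UNIV. if i = j then 1 else 0)"
    by (intro sum.cong) (auto simp: axis_def)
  finally show ?thesis by simp
qed

lemma blk_entry: "cmod (A $ i $ j) \<le> blk_norm A"
proof -
  have "A $ i $ j = (A *v axis j 1) $ i"
    by (simp add: matrix_vector_mult_def axis_def if_distrib cong: if_cong)
  also have "cmod \<dots> \<le> norm (A *v axis j 1)" by (rule Finite_Cartesian_Product.norm_nth_le)
  also have "\<dots> \<le> blk_norm A * norm (axis j (1::complex))" by (rule blk_apply)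
  finally show ?thesis by (simp add: norm_axis_c)
qed

lemma blk_norm_le_entries: "blk_norm A \<le> (\<Sum>i\<in>UNIV. \<Sum>j\<in>UNIV. cmod (A $ i $ j))"
  unfolding blk_norm_def
proof (rule onorm_le)
  fix v :: "complex^2"
  have "norm (A *v v) \<le> (\<Sum>i\<in>UNIV. norm ((A *v v) $ i))"
    unfolding norm_vec_def by (rule L2_set_le_sum) simp
  also have "\<dots> \<le> (\<Sum>i\<in>UNIV. \<Sum>j\<in>UNIV. cmod (A $ i $ j) * norm v)"
  proof (rule sum_mono)
    fix i
    have "norm ((A *v v) $ i) = norm (\<Sum>j\<in>UNIV. A $ i $ j * v $ j)"
      by (simp add: matrix_vector_mult_def)
    also have "\<dots> \<le> (\<Sum>j\<in>UNIV. cmod (A $ i $ j) * cmod (v $ j))"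
      by (rule order_trans[OF norm_sum]) (simp add: norm_mult)
    also have "\<dots> \<le> (\<Sum>j\<in>UNIV. cmod (A $ i $ j) * norm v)"
      by (intro sum_mono mult_left_mono Finite_Cartesian_Product.norm_nth_le) auto
    finally show "norm ((A *v v) $ i) \<le> (\<Sum>j\<in>UNIV. cmod (A $ i $ j) * norm v)" .
  qed
  finally show "norm (A *v v) \<le> (\<Sum>i\<in>UNIV. \<Sum>j\<in>UNIV. cmod (A $ i $ j)) * norm v"
    by (simp add: sum_distrib_right)
qed

lemma blk_norm_mult: "blk_norm (A ** B) \<le> blk_norm A * blk_norm B"
  unfolding blk_norm_def
proof (rule onorm_bound)
  show "0 \<le> onorm ((*v) A) * onorm ((*v) B)"
    using blk_norm_nonneg unfolding blk_norm_def by simp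
  fix v :: "complex^2"
  have "norm ((A ** B) *v v) = norm (A *v (B *v v))" by (simp add: matrix_vector_mul_assoc)
  also have "\<dots> \<le> blk_norm A * norm (B *v v)" by (rule blk_apply)
  also have "\<dots> \<le> blk_norm A * (blk_norm B * norm v)"
    by (intro mult_left_mono blk_apply blk_norm_nonneg)
  finally show "norm ((A ** B) *v v) \<le> onorm ((*v) A) * onorm ((*v) B) * norm v"
    by (simp add: blk_norm_def mult.assoc)
qed

lemma norm_le_blk: "norm (A::block) \<le> 4 * blk_norm A"
proof -
  have "norm A \<le> (\<Sum>i\<in>UNIV. norm (A $ i))" unfolding norm_vec_def by (rule L2_set_le_sum) simp
  also have "\<dots> \<le> (\<Sum>i\<in>UNIV. \<Sum>j\<in>UNIV. cmod (A $ i $ j))"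
    by (intro sum_mono) (simp add: norm_vec_def L2_set_le_sum)
  also have "\<dots> \<le> (\<Sum>i\<in>(UNIV::2 set). \<Sum>j\<in>(UNIV::2 set). blk_norm A)"
    by (intro sum_mono blk_entry)
  finally show ?thesis by simp
qed


lemma bl_mv_left: "bounded_linear (\<lambda>B::block. B *v v)"
  unfolding linear_conv_bounded_linear[symmetric]
  apply (rule linearI)
  apply (simp add: matrix_vector_mult_def vec_eq_iff sum.distrib algebra_simps)
  apply (simp add: matrix_vector_mult_def vec_eq_iff scaleR_sum_right)
  done

lemma bl_mm_left: "bounded_linear (\<lambda>B::block. A ** B)"
  unfolding linear_conv_bounded_linear[symmetric]
  apply (rule linearI)
  apply (simp add: matrix_matrix_mult_def vec_eq_iff sum.distrib algebra_simps)
  apply (simp add: matrix_matrix_mult_def vec_eq_iff scaleR_sum_right)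
  done

lemma bl_mm_right: "bounded_linear (\<lambda>A::block. A ** B)"
  unfolding linear_conv_bounded_linear[symmetric]
  apply (rule linearI)
  apply (simp add: matrix_matrix_mult_def vec_eq_iff sum.distrib algebra_simps)
  apply (simp add: matrix_matrix_mult_def vec_eq_iff scaleR_sum_right)
  done

lemma bl_entry: "bounded_linear (\<lambda>A::block. A $ i $ j)"
  unfolding linear_conv_bounded_linear[symmetric]
  by (rule linearI) simp_all

lemma bl_adj: "bounded_linear blk_adj"
  unfolding linear_conv_bounded_linear[symmetric]
  apply (rule linearI)
  apply (simp add: blk_adj_def vec_eq_iff)
  apply (simp add: blk_adj_def vec_eq_iff)
  done

lemma blk_norm_infsum:
  assumes "f summable_on A" "(\<lambda>z. blk_norm (f z)) summable_on A"
  shows "blk_norm (infsum f A) \<le> (\<Sum>\<^sub>\<infinity>z\<in>A. blk_norm (f z))"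
  unfolding blk_norm_def
proof (rule onorm_le)
  fix v :: "complex^2"
  have h1: "((\<lambda>z. f z *v v) has_sum (infsum f A *v v)) A"
    by (rule has_sum_bounded_linear[OF bl_mv_left, of f]) (use assms(1) in auto)
  have h2: "((\<lambda>z. blk_norm (f z) * norm v) has_sum ((\<Sum>\<^sub>\<infinity>z\<in>A. blk_norm (f z)) * norm v)) A"
    by (rule has_sum_cmult_left) (use assms(2) in auto)
  show "norm (infsum f A *v v) \<le> (\<Sum>\<^sub>\<infinity>z\<in>A. onorm ((*v) (f z))) * norm v"
    using norm_infsum_le[OF h1 h2] blk_apply unfolding blk_norm_def by blast
qed

lemma blk_summable:
  assumes "(\<lambda>z. blk_norm (f z)) summable_on A"
  shows "f summable_on A"
proof (rule abs_summable_summable)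
  have "(\<lambda>z. 4 * blk_norm (f z)) summable_on A" using assms by (rule summable_on_cmult_right)
  then show "(\<lambda>z. norm (f z)) summable_on A"
    by (rule summable_on_comparison_test) (auto simp: norm_le_blk)
qed

lemma blk_adj_mult: "blk_adj (A ** B) = blk_adj B ** blk_adj A"
  by (auto simp: blk_adj_def matrix_matrix_mult_def vec_eq_iff mult.commute)

lemma blk_adj_adj[simp]: "blk_adj (blk_adj A) = A"
  by (auto simp: blk_adj_def vec_eq_iff)

lemma blk_adj_mat1[simp]: "blk_adj (mat 1) = mat 1" and blk_adj_0[simp]: "blk_adj 0 = 0"
  by (auto simp: blk_adj_def vec_eq_iff mat_def)

lemma infsum_blk_adj:
  "f summable_on A \<Longrightarrow> blk_adj (infsum f A) = (\<Sum>\<^sub>\<infinity>z\<in>A. blk_adj (f z))"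
  by (metis has_sum_bounded_linear[OF bl_adj] has_sum_infsum infsumI)


lemma geo_int_summable:
  assumes "d > 0"
  shows "(\<lambda>z::int. exp (- real_of_int \<bar>z - w\<bar> / d)) summable_on UNIV"
proof -
  define q where "q = exp (- 1 / d)"
  have q: "0 \<le> q" "q < 1" using assms by (auto simp: q_def)
  have qpow: "exp (- (real n / d)) = q ^ n" for n :: nat
    by (simp add: q_def exp_of_nat_mult[symmetric])
  have gs: "(\<lambda>n::nat. q ^ n) summable_on UNIV"
    by (rule summable_nonneg_imp_summable_on) (use q in \<open>auto intro: summable_geometric\<close>)
  have A: "(\<lambda>z::int. exp (- real_of_int \<bar>z - w\<bar> / d)) summable_on ((\<lambda>n. w + int n) ` UNIV)"
    by (subst summable_on_reindex) (auto intro: inj_onI simp: o_def qpow gs)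
  have B: "(\<lambda>z::int. exp (- real_of_int \<bar>z - w\<bar> / d)) summable_on ((\<lambda>n. w - int n) ` UNIV)"
    by (subst summable_on_reindex) (auto intro: inj_onI simp: o_def qpow gs)
  have U: "UNIV = (\<lambda>n. w + int n) ` UNIV \<union> (\<lambda>n. w - int n) ` UNIV"
  proof -
    have "z \<in> (\<lambda>n. w + int n) ` UNIV \<union> (\<lambda>n. w - int n) ` UNIV" for z
    proof (cases "w \<le> z")
      case True then show ?thesis by (intro UnI1 image_eqI[of _ _ "nat (z - w)"]) auto
    next
      case False then show ?thesis by (intro UnI2 image_eqI[of _ _ "nat (w - z)"]) auto
    qed
    then show ?thesis by auto
  qed
  show ?thesis by (subst U) (rule summable_on_union[OF A B])
qed

lemma blk_norm_mat1: "blk_norm (mat 1) \<le> 1"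
  unfolding blk_norm_def by (rule onorm_bound) auto

lemma blk_norm_0[simp]: "blk_norm 0 = 0"
proof -
  have "(*v) (0::block) = (\<lambda>x. 0)" by (auto simp: fun_eq_iff vec_eq_iff matrix_vector_mult_def)
  then show ?thesis unfolding blk_norm_def by (simp add: onorm_zero)
qed

lemma exp_tri:
  assumes "d > 0"
  shows "exp (- real_of_int \<bar>z - y\<bar> / d) \<le> exp (real_of_int \<bar>x - z\<bar> / d) * exp (- real_of_int \<bar>x - y\<bar> / d)"
proof -
  have "- real_of_int \<bar>z - y\<bar> / d \<le> real_of_int \<bar>x - z\<bar> / d + - real_of_int \<bar>x - y\<bar> / d"
  proof -
    have "- real_of_int \<bar>z - y\<bar> \<le> real_of_int \<bar>x - z\<bar> + - real_of_int \<bar>x - y\<bar>" by linarith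
    then have "- real_of_int \<bar>z - y\<bar> / d \<le> (real_of_int \<bar>x - z\<bar> + - real_of_int \<bar>x - y\<bar>) / d"
      using assms by (intro divide_right_mono) auto
    then show ?thesis by (simp add: add_divide_distrib diff_divide_distrib)
  qed
  then show ?thesis by (simp add: exp_add[symmetric])
qed

locale setting =
  fixes Lam :: "int set" and H :: "int \<Rightarrow> int \<Rightarrow> block" and d K :: real
  assumes selfadj: "\<forall>x\<in>Lam. \<forall>x'\<in>Lam. H x' x = blk_adj (H x x')"
    and d_pos: "d > 0" and K_pos: "K > 0"
    and dsum: "\<forall>x\<in>Lam. (\<lambda>x'. blk_norm (H x x') * exp (real_of_int \<bar>x - x'\<bar> / d)) summable_on Lam"
    and dec: "\<forall>x\<in>Lam. (\<Sum>\<^sub>\<infinity>x'\<in>Lam. blk_norm (H x x') * exp (real_of_int \<bar>x - x'\<bar> / d)) \<le> K"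
begin

abbreviation "P \<equiv> ker_pow Lam H"

lemma Hrow: "x \<in> Lam \<Longrightarrow> (\<lambda>z. blk_norm (H x z)) summable_on Lam"
proof (rule summable_on_comparison_test[OF dsum[rule_format]])
  fix z assume "x \<in> Lam" "z \<in> Lam"
  have "1 \<le> exp (real_of_int \<bar>x - z\<bar> / d)" using d_pos by simp
  then show "blk_norm (H x z) \<le> blk_norm (H x z) * exp (real_of_int \<bar>x - z\<bar> / d)"
    using blk_norm_nonneg[of "H x z"] by (simp add: mult_le_cancel_left1)
qed (auto simp: blk_norm_nonneg)

lemma Hprod:
  assumes x: "x \<in> Lam" and B: "\<And>z. z \<in> Lam \<Longrightarrow> blk_norm (B z) \<le> M"
  shows "(\<lambda>z. blk_norm (H x z ** B z)) summable_on Lam" "(\<lambda>z. H x z ** B z) summable_on Lam"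
proof -
  have "(\<lambda>z. blk_norm (H x z) * M) summable_on Lam" by (rule summable_on_cmult_left[OF Hrow[OF x]])
  then show 1: "(\<lambda>z. blk_norm (H x z ** B z)) summable_on Lam"
    by (rule summable_on_comparison_test)
       (auto intro: order_trans[OF blk_norm_mult] mult_left_mono B blk_norm_nonneg)
  show "(\<lambda>z. H x z ** B z) summable_on Lam" by (rule blk_summable[OF 1])
qed

lemma pow_bound:
  "x \<in> Lam \<Longrightarrow> y \<in> Lam \<Longrightarrow> blk_norm (P n x y) \<le> K ^ n * exp (- real_of_int \<bar>x - y\<bar> / d)"
proof (induction n arbitrary: x y)
  case 0
  then show ?case using blk_norm_mat1 by auto
next
  case (Suc n)
  have Bb: "blk_norm (P n z y) \<le> K ^ n" if "z \<in> Lam" for z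
    using Suc.IH[OF that Suc.prems(2)] K_pos
    by (smt (verit, best) exp_le_one_iff divide_nonpos_pos d_pos mult_left_le zero_le_power abs_ge_zero of_int_nonneg neg_le_0_iff_le)
  note S = Hprod[OF Suc.prems(1), of "\<lambda>z. P n z y", OF Bb]
  define e where "e = exp (- real_of_int \<bar>x - y\<bar> / d)"
  have pt: "blk_norm (H x z ** P n z y) \<le> (blk_norm (H x z) * exp (real_of_int \<bar>x - z\<bar> / d)) * (K ^ n * e)"
    if z: "z \<in> Lam" for z
  proof -
    have "blk_norm (H x z ** P n z y) \<le> blk_norm (H x z) * blk_norm (P n z y)" by (rule blk_norm_mult)
    also have "\<dots> \<le> blk_norm (H x z) * (K ^ n * exp (- real_of_int \<bar>z - y\<bar> / d))"
      by (intro mult_left_mono Suc.IH z Suc.prems blk_norm_nonneg)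
    also have "\<dots> \<le> blk_norm (H x z) * (K ^ n * (exp (real_of_int \<bar>x - z\<bar> / d) * e))"
      unfolding e_def using K_pos
      by (intro mult_left_mono exp_tri d_pos blk_norm_nonneg) auto
    finally show ?thesis by (simp add: algebra_simps)
  qed
  have "blk_norm (P (Suc n) x y) = blk_norm (\<Sum>\<^sub>\<infinity>z\<in>Lam. H x z ** P n z y)" by simp
  also have "\<dots> \<le> (\<Sum>\<^sub>\<infinity>z\<in>Lam. blk_norm (H x z ** P n z y))"
    by (rule blk_norm_infsum[OF S(2) S(1)])
  also have "\<dots> \<le> (\<Sum>\<^sub>\<infinity>z\<in>Lam. (blk_norm (H x z) * exp (real_of_int \<bar>x - z\<bar> / d)) * (K ^ n * e))"
    by (rule infsum_mono[OF S(1) summable_on_cmult_left[OF dsum[rule_format, OF Suc.prems(1)]] pt])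
  also have "\<dots> = (\<Sum>\<^sub>\<infinity>z\<in>Lam. blk_norm (H x z) * exp (real_of_int \<bar>x - z\<bar> / d)) * (K ^ n * e)"
    by (rule infsum_cmult_left[OF dsum[rule_format, OF Suc.prems(1)]])
  also have "\<dots> \<le> K * (K ^ n * e)"
    using dec Suc.prems K_pos by (intro mult_right_mono) (auto simp: e_def)
  finally show ?case by (simp add: e_def)
qed

end

context setting begin

definition "G = (\<Sum>\<^sub>\<infinity>z\<in>(UNIV::int set). exp (- real_of_int \<bar>z\<bar> / d))"

lemma geo_summ: "(\<lambda>z. exp (- real_of_int \<bar>w - z\<bar> / d)) summable_on A"
proof -
  have "(\<lambda>z::int. exp (- real_of_int \<bar>z - w\<bar> / d)) summable_on UNIV" by (rule geo_int_summable[OF d_pos])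
  then have "(\<lambda>z::int. exp (- real_of_int \<bar>z - w\<bar> / d)) summable_on A"
    by (rule summable_on_subset_banach) auto
  then show ?thesis by (simp add: abs_minus_commute)
qed

lemma geo_bound: "(\<Sum>\<^sub>\<infinity>z\<in>A. exp (- real_of_int \<bar>w - z\<bar> / d)) \<le> G"
proof -
  have "(\<Sum>\<^sub>\<infinity>z\<in>A. exp (- real_of_int \<bar>w - z\<bar> / d)) \<le> (\<Sum>\<^sub>\<infinity>z\<in>UNIV. exp (- real_of_int \<bar>w - z\<bar> / d))"
    by (rule infsum_mono2[OF geo_summ geo_summ]) auto
  also have "\<dots> = (\<Sum>\<^sub>\<infinity>z\<in>UNIV. exp (- real_of_int \<bar>z\<bar> / d))"
  proof -
    have b: "bij_betw (\<lambda>z. w - z) UNIV UNIV"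
      by (rule bij_betwI[of _ _ _ "\<lambda>z. w - z"]) auto
    show ?thesis
      using infsum_reindex_bij_betw[OF b, of "\<lambda>z. exp (- real_of_int \<bar>z\<bar> / d)"] by (simp add: o_def)
  qed
  finally show ?thesis unfolding G_def .
qed

lemma G_nonneg: "0 \<le> G"
  unfolding G_def by (rule infsum_nonneg) auto

lemma pow_bound': "x \<in> Lam \<Longrightarrow> y \<in> Lam \<Longrightarrow> blk_norm (P n x y) \<le> K ^ n"
  using pow_bound[of x y n] K_pos
  by (smt (verit, best) exp_le_one_iff divide_nonpos_pos d_pos mult_left_le zero_le_power abs_ge_zero of_int_nonneg neg_le_0_iff_le)

lemma P1: "x \<in> Lam \<Longrightarrow> y \<in> Lam \<Longrightarrow> P 1 x y = H x y"
proof -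
  assume x: "x \<in> Lam" and y: "y \<in> Lam"
  have "P 1 x y = (\<Sum>\<^sub>\<infinity>z\<in>Lam. H x z ** (if z = y then mat 1 else 0))" by simp
  also have "\<dots> = (\<Sum>\<^sub>\<infinity>z\<in>{y}. H x z ** (if z = y then mat 1 else 0))"
    by (rule infsum_cong_neutral) (use y in auto)
  finally show ?thesis by simp
qed

end

context setting begin
lemma assoc: "x \<in> Lam \<Longrightarrow> y \<in> Lam \<Longrightarrow> P (n + m) x y = (\<Sum>\<^sub>\<infinity>z\<in>Lam. P n x z ** P m z y)"
proof (induction n arbitrary: x)
  case 0
  have "(\<Sum>\<^sub>\<infinity>z\<in>Lam. P 0 x z ** P m z y) = (\<Sum>\<^sub>\<infinity>z\<in>{x}. P 0 x z ** P m z y)"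
    by (rule infsum_cong_neutral) (use 0 in auto)
  then show ?case by simp
next
  case (Suc n)
  note x = Suc.prems(1) and y = Suc.prems(2)
  have inner: "(\<lambda>z. P n w z ** P m z y) summable_on Lam" if w: "w \<in> Lam" for w
  proof (rule blk_summable)
    have "(\<lambda>z. K ^ n * K ^ m * exp (- real_of_int \<bar>w - z\<bar> / d)) summable_on Lam"
      by (rule summable_on_cmult_right[OF geo_summ])
    then show "(\<lambda>z. blk_norm (P n w z ** P m z y)) summable_on Lam"
    proof (rule summable_on_comparison_test)
      fix z assume z: "z \<in> Lam"
      have "blk_norm (P n w z ** P m z y) \<le> blk_norm (P n w z) * blk_norm (P m z y)" by (rule blk_norm_mult)
      also have "\<dots> \<le> (K ^ n * exp (- real_of_int \<bar>w - z\<bar> / d)) * K ^ m"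
        by (intro mult_mono pow_bound pow_bound' w z y blk_norm_nonneg) (use K_pos in auto)
      finally show "blk_norm (P n w z ** P m z y) \<le> K ^ n * K ^ m * exp (- real_of_int \<bar>w - z\<bar> / d)"
        by (simp add: algebra_simps)
    qed (auto simp: blk_norm_nonneg)
  qed
  have joint: "(\<lambda>(w, z). H x w ** (P n w z ** P m z y)) summable_on Lam \<times> Lam"
  proof -
    define F where "F = (\<lambda>(w, z). blk_norm (H x w) * (K ^ n * K ^ m) * exp (- real_of_int \<bar>w - z\<bar> / d))"
    have hs: "((\<lambda>z. F (w, z)) has_sum (blk_norm (H x w) * (K ^ n * K ^ m) * (\<Sum>\<^sub>\<infinity>z\<in>Lam. exp (- real_of_int \<bar>w - z\<bar> / d)))) Lam" for w
    proof -
      have "((\<lambda>z. exp (- real_of_int \<bar>w - z\<bar> / d)) has_sum (\<Sum>\<^sub>\<infinity>z\<in>Lam. exp (- real_of_int \<bar>w - z\<bar> / d))) Lam"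
        by (rule has_sum_infsum[OF geo_summ])
      from has_sum_cmult_right[OF this, of "blk_norm (H x w) * (K ^ n * K ^ m)"]
      show ?thesis unfolding F_def prod.case .
    qed
    have gs: "(\<lambda>w. blk_norm (H x w) * (K ^ n * K ^ m) * (\<Sum>\<^sub>\<infinity>z\<in>Lam. exp (- real_of_int \<bar>w - z\<bar> / d))) summable_on Lam"
    proof (rule summable_on_comparison_test)
      show "(\<lambda>w. blk_norm (H x w) * (K ^ n * K ^ m) * G) summable_on Lam"
        by (intro summable_on_cmult_left Hrow x)
      fix w assume "w \<in> Lam"
      show "blk_norm (H x w) * (K ^ n * K ^ m) * (\<Sum>\<^sub>\<infinity>z\<in>Lam. exp (- real_of_int \<bar>w - z\<bar> / d))
            \<le> blk_norm (H x w) * (K ^ n * K ^ m) * G"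
        using K_pos by (intro mult_left_mono geo_bound mult_nonneg_nonneg blk_norm_nonneg) auto
      show "0 \<le> blk_norm (H x w) * (K ^ n * K ^ m) * (\<Sum>\<^sub>\<infinity>z\<in>Lam. exp (- real_of_int \<bar>w - z\<bar> / d))"
        using K_pos by (intro mult_nonneg_nonneg blk_norm_nonneg infsum_nonneg) auto
    qed
    have Fs: "F summable_on Lam \<times> Lam"
    proof (rule summable_on_SigmaI[where f=F and A=Lam and B="\<lambda>_. Lam" and
          g="\<lambda>w. blk_norm (H x w) * (K ^ n * K ^ m) * (\<Sum>\<^sub>\<infinity>z\<in>Lam. exp (- real_of_int \<bar>w - z\<bar> / d))"])
      show "\<And>w. w \<in> Lam \<Longrightarrow> ((\<lambda>z. F (w, z)) has_sum (blk_norm (H x w) * (K ^ n * K ^ m) * (\<Sum>\<^sub>\<infinity>z\<in>Lam. exp (- real_of_int \<bar>w - z\<bar> / d)))) Lam"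
        by (rule hs)
      show "(\<lambda>w. blk_norm (H x w) * (K ^ n * K ^ m) * (\<Sum>\<^sub>\<infinity>z\<in>Lam. exp (- real_of_int \<bar>w - z\<bar> / d))) summable_on Lam" by (rule gs)
      fix w z
      show "0 \<le> F (w, z)" unfolding F_def prod.case using K_pos
        by (intro mult_nonneg_nonneg blk_norm_nonneg) auto
    qed
    show ?thesis
    proof (rule blk_summable, rule summable_on_comparison_test[OF Fs])
      fix p assume p: "p \<in> Lam \<times> Lam"
      then obtain w z where wz: "p = (w, z)" "w \<in> Lam" "z \<in> Lam" by auto
      have "blk_norm (H x w ** (P n w z ** P m z y)) \<le> blk_norm (H x w) * (blk_norm (P n w z) * blk_norm (P m z y))"
        by (intro order_trans[OF blk_norm_mult] mult_left_mono blk_norm_mult blk_norm_nonneg)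
      also have "\<dots> \<le> blk_norm (H x w) * ((K ^ n * exp (- real_of_int \<bar>w - z\<bar> / d)) * K ^ m)"
        by (intro mult_left_mono mult_mono pow_bound pow_bound' wz y blk_norm_nonneg) (use K_pos in auto)
      finally show "blk_norm ((\<lambda>(w, z). H x w ** (P n w z ** P m z y)) p) \<le> F p"
        using wz by (simp add: F_def algebra_simps)
    qed (auto simp: blk_norm_nonneg)
  qed
  have "P (Suc n + m) x y = (\<Sum>\<^sub>\<infinity>w\<in>Lam. H x w ** P (n + m) w y)" by simp
  also have "\<dots> = (\<Sum>\<^sub>\<infinity>w\<in>Lam. H x w ** (\<Sum>\<^sub>\<infinity>z\<in>Lam. P n w z ** P m z y))"
    by (rule infsum_cong) (simp add: Suc.IH y)
  also have "\<dots> = (\<Sum>\<^sub>\<infinity>w\<in>Lam. \<Sum>\<^sub>\<infinity>z\<in>Lam. H x w ** (P n w z ** P m z y))"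
  proof (rule infsum_cong)
    fix w assume w: "w \<in> Lam"
    have "((\<lambda>z. H x w ** (P n w z ** P m z y)) has_sum H x w ** (\<Sum>\<^sub>\<infinity>z\<in>Lam. P n w z ** P m z y)) Lam"
      by (rule has_sum_bounded_linear[OF bl_mm_left has_sum_infsum[OF inner[OF w]]])
    from infsumI[OF this] show "H x w ** (\<Sum>\<^sub>\<infinity>z\<in>Lam. P n w z ** P m z y) = (\<Sum>\<^sub>\<infinity>z\<in>Lam. H x w ** (P n w z ** P m z y))"
      by simp
  qed
  also have "\<dots> = (\<Sum>\<^sub>\<infinity>z\<in>Lam. \<Sum>\<^sub>\<infinity>w\<in>Lam. H x w ** (P n w z ** P m z y))"
    by (rule infsum_swap_banach[OF joint])
  also have "\<dots> = (\<Sum>\<^sub>\<infinity>z\<in>Lam. (\<Sum>\<^sub>\<infinity>w\<in>Lam. H x w ** P n w z) ** P m z y)"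
  proof (rule infsum_cong)
    fix z assume z: "z \<in> Lam"
    have "(\<lambda>w. H x w ** P n w z) summable_on Lam"
      by (rule Hprod(2)[OF x pow_bound'[OF _ z]])
    then have "((\<lambda>w. (H x w ** P n w z) ** P m z y) has_sum (\<Sum>\<^sub>\<infinity>w\<in>Lam. H x w ** P n w z) ** P m z y) Lam"
      by (rule has_sum_bounded_linear[OF bl_mm_right has_sum_infsum])
    from infsumI[OF this] show "(\<Sum>\<^sub>\<infinity>w\<in>Lam. H x w ** (P n w z ** P m z y)) = (\<Sum>\<^sub>\<infinity>w\<in>Lam. H x w ** P n w z) ** P m z y"
      by (simp add: matrix_mul_assoc)
  qed
  also have "\<dots> = (\<Sum>\<^sub>\<infinity>z\<in>Lam. P (Suc n) x z ** P m z y)" by simp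
  finally show ?case .
qed

end

context setting begin

lemma Pprod_summ:
  assumes x: "x \<in> Lam" and B: "\<And>w. w \<in> Lam \<Longrightarrow> blk_norm (B w) \<le> M"
  shows "(\<lambda>w. P n x w ** B w) summable_on Lam"
proof (rule blk_summable)
  have "(\<lambda>w. K ^ n * M * exp (- real_of_int \<bar>x - w\<bar> / d)) summable_on Lam"
    by (rule summable_on_cmult_right[OF geo_summ])
  then show "(\<lambda>w. blk_norm (P n x w ** B w)) summable_on Lam"
  proof (rule summable_on_comparison_test)
    fix w assume w: "w \<in> Lam"
    have "blk_norm (P n x w ** B w) \<le> blk_norm (P n x w) * blk_norm (B w)" by (rule blk_norm_mult)
    also have "\<dots> \<le> (K ^ n * exp (- real_of_int \<bar>x - w\<bar> / d)) * M"
      by (intro mult_mono pow_bound x w B blk_norm_nonneg) (use K_pos in auto)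
    finally show "blk_norm (P n x w ** B w) \<le> K ^ n * M * exp (- real_of_int \<bar>x - w\<bar> / d)"
      by (simp add: algebra_simps)
  qed (auto simp: blk_norm_nonneg)
qed

lemma adjP: "x \<in> Lam \<Longrightarrow> z \<in> Lam \<Longrightarrow> P n z x = blk_adj (P n x z)"
proof (induction n arbitrary: x z)
  case 0
  then show ?case by (cases "x = z") auto
next
  case (Suc n)
  note x = Suc.prems(1) and z = Suc.prems(2)
  have S: "(\<lambda>w. P n x w ** H w z) summable_on Lam"
  proof (rule Pprod_summ[OF x, of "\<lambda>w. H w z" K])
    fix w assume w: "w \<in> Lam"
    show "blk_norm (H w z) \<le> K" using pow_bound'[OF w z, of 1] unfolding P1[OF w z] by simp
  qed
  have "P (Suc n) x z = P (n + 1) x z" by simp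
  also have "\<dots> = (\<Sum>\<^sub>\<infinity>w\<in>Lam. P n x w ** P 1 w z)" by (rule assoc[OF x z])
  also have "\<dots> = (\<Sum>\<^sub>\<infinity>w\<in>Lam. P n x w ** H w z)"
  proof (rule infsum_cong)
    fix w assume w: "w \<in> Lam"
    show "P n x w ** P 1 w z = P n x w ** H w z" using P1[OF w z] by (simp only:)
  qed
  finally have e: "blk_adj (P (Suc n) x z) = (\<Sum>\<^sub>\<infinity>w\<in>Lam. blk_adj (P n x w ** H w z))"
    using infsum_blk_adj[OF S] by simp
  also have "\<dots> = (\<Sum>\<^sub>\<infinity>w\<in>Lam. H z w ** P n w x)"
  proof (rule infsum_cong)
    fix w assume w: "w \<in> Lam"
    show "blk_adj (P n x w ** H w z) = H z w ** P n w x"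
    proof -
      have hzw: "H z w = blk_adj (H w z)" using selfadj w z by blast
      show ?thesis unfolding blk_adj_mult hzw Suc.IH[OF x w] ..
    qed
  qed
  also have "\<dots> = P (Suc n) z x" by simp
  finally show ?case by simp
qed

end

lemma has_sum_finsum:
  fixes f :: "'i \<Rightarrow> 'a \<Rightarrow> 'b::{topological_comm_monoid_add}"
  assumes "finite I" "\<And>i. i \<in> I \<Longrightarrow> (f i has_sum s i) A"
  shows "((\<lambda>x. \<Sum>i\<in>I. f i x) has_sum (\<Sum>i\<in>I. s i)) A"
  using assms
proof (induction I rule: finite_induct)
  case empty then show ?case by (simp add: has_sum_0)
next
  case (insert i I)
  then show ?case by (simp add: has_sum_add)
qed

lemma has_sum_prod_nonneg:
  fixes f g :: "_ \<Rightarrow> real"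
  assumes f: "(f has_sum a) A" and g: "(g has_sum b) B"
    and fn: "\<And>x. 0 \<le> f x" and gn: "\<And>y. 0 \<le> g y"
  shows "((\<lambda>(x, y). f x * g y) has_sum (a * b)) (A \<times> B)"
proof -
  have inner: "\<And>x. x \<in> A \<Longrightarrow> ((\<lambda>y. f x * g y) has_sum (f x * b)) B"
    by (rule has_sum_cmult_right[OF g])
  have outer: "((\<lambda>x. f x * b) has_sum (a * b)) A"
    by (rule has_sum_cmult_left[OF f])
  have sm: "(\<lambda>p. f (fst p) * g (snd p)) summable_on (Sigma A (\<lambda>_. B))"
    by (rule summable_on_SigmaI[where g="\<lambda>x. f x * b"])
       (use inner outer fn gn in \<open>auto simp: summable_on_def intro: mult_nonneg_nonneg\<close>)
  have "((\<lambda>p. f (fst p) * g (snd p)) has_sum (a * b)) (Sigma A (\<lambda>_. B))"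
    by (rule has_sum_SigmaI[where g="\<lambda>x. f x * b"]) (use inner outer sm in auto)
  then show ?thesis by (simp add: case_prod_beta')
qed

lemma has_sum_prod_abs:
  fixes a b :: "_ \<Rightarrow> complex"
  assumes a: "(a has_sum sa) A" and b: "(b has_sum sb) B"
    and na: "((\<lambda>x. norm (a x)) has_sum ta) A" and nb: "((\<lambda>y. norm (b y)) has_sum tb) B"
  shows "((\<lambda>(x, y). a x * b y) has_sum (sa * sb)) (A \<times> B)"
proof -
  have "((\<lambda>(x, y). norm (a x) * norm (b y)) has_sum (ta * tb)) (A \<times> B)"
    by (rule has_sum_prod_nonneg[OF na nb]) auto
  then have abs: "(\<lambda>p. norm (a (fst p) * b (snd p))) summable_on (A \<times> B)"
    by (auto simp: summable_on_def case_prod_beta' norm_mult)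
  then have sm: "(\<lambda>p. a (fst p) * b (snd p)) summable_on (Sigma A (\<lambda>_. B))"
    by (simp add: abs_summable_summable case_prod_beta')
  have "((\<lambda>p. a (fst p) * b (snd p)) has_sum (sa * sb)) (Sigma A (\<lambda>_. B))"
    by (rule has_sum_SigmaI[where g="\<lambda>x. a x * sb"])
       (use sm in \<open>auto intro: has_sum_cmult_right[OF b] has_sum_cmult_left[OF a]\<close>)
  then show ?thesis by (simp add: case_prod_beta')
qed

definition cc :: "real \<Rightarrow> nat \<Rightarrow> complex" where
  "cc w n = (\<i> * complex_of_real w) ^ n / of_nat (fact n)"

lemma norm_cc: "cmod (cc w n) = \<bar>w\<bar> ^ n / fact n"
  by (simp add: cc_def norm_divide norm_power norm_mult)

lemma cnj_cc: "cnj (cc w n) = cc (- w) n"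
  by (simp add: cc_def)

lemma cc_conv: "(\<i> * complex_of_real v) ^ n /\<^sub>R fact n = cc v n"
  by (simp add: cc_def scaleR_conv_of_real divide_inverse mult.commute of_real_inverse)

lemma cc_sum: "(\<Sum>i\<le>N. cc (- w) i * cc w (N - i)) = (if N = 0 then 1 else 0)"
proof -
  have "(\<i> * complex_of_real (- w) + \<i> * complex_of_real w) ^ N /\<^sub>R fact N
      = (\<Sum>i\<le>N. ((\<i> * complex_of_real (- w)) ^ i /\<^sub>R fact i) * ((\<i> * complex_of_real w) ^ (N - i) /\<^sub>R fact (N - i)))"
    by (rule exp_series_add_commuting) (simp add: mult.commute)
  then have "(\<Sum>i\<le>N. cc (- w) i * cc w (N - i)) = (\<i> * complex_of_real (- w) + \<i> * complex_of_real w) ^ N /\<^sub>R fact N"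
    by (simp only: cc_conv)
  also have "\<dots> = (0::complex) ^ N /\<^sub>R fact N" by simp
  finally show ?thesis by (cases N) auto
qed

lemma summable_expK: "summable (\<lambda>n. r ^ n / fact n :: real)"
  using summable_exp[of r] by (simp add: divide_inverse mult.commute)

context setting begin

lemma cc_P_bound:
  "x \<in> Lam \<Longrightarrow> y \<in> Lam \<Longrightarrow> cmod (cc w n * (P n x y $ i $ j)) \<le> (\<bar>w\<bar> * K) ^ n / fact n * exp (- real_of_int \<bar>x - y\<bar> / d)"
proof -
  assume xy: "x \<in> Lam" "y \<in> Lam"
  have "cmod (cc w n * (P n x y $ i $ j)) \<le> (\<bar>w\<bar> ^ n / fact n) * (K ^ n * exp (- real_of_int \<bar>x - y\<bar> / d))"
    unfolding norm_mult norm_cc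
    by (intro mult_left_mono order_trans[OF blk_entry pow_bound[OF xy]]) auto
  then show ?thesis by (simp add: power_mult_distrib)
qed

lemma U_hs: "x \<in> Lam \<Longrightarrow> y \<in> Lam \<Longrightarrow>
  ((\<lambda>n. cc w n * (P n x y $ i $ j)) has_sum (ker_exp Lam H w x y $ i $ j)) UNIV"
proof -
  assume xy: "x \<in> Lam" "y \<in> Lam"
  have ns: "summable (\<lambda>n. norm (cc w n * (P n x y $ i $ j)))"
  proof (rule summable_comparison_test[OF _ summable_mult2[OF summable_expK[of "\<bar>w\<bar> * K"]]])
    show "\<exists>N. \<forall>n\<ge>N. norm (norm (cc w n * P n x y $ i $ j)) \<le> (\<bar>w\<bar> * K) ^ n / fact n * exp (- real_of_int \<bar>x - y\<bar> / d)"
      using cc_P_bound[OF xy] by auto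
  qed
  have "ker_exp Lam H w x y $ i $ j = (\<Sum>n. cc w n * (P n x y $ i $ j))"
    by (simp add: ker_exp_def cc_def)
  then show ?thesis
    using norm_summable_imp_has_sum[OF ns summable_sums[OF summable_norm_cancel[OF ns]]] by simp
qed

end

lemma e_hs: "((\<lambda>n. r ^ n / fact n :: real) has_sum (\<Sum>\<^sub>\<infinity>n. r ^ n / fact n)) UNIV"
proof -
  have "(\<lambda>n. \<bar>r\<bar> ^ n / fact n :: real) summable_on UNIV"
    by (rule summable_nonneg_imp_summable_on[OF summable_expK]) auto
  then have "(\<lambda>n. norm (r ^ n / fact n :: real)) summable_on UNIV"
    by (simp add: norm_divide norm_power power_abs)
  then have "(\<lambda>n. r ^ n / fact n :: real) summable_on UNIV"
    by (rule abs_summable_summable)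
  then show ?thesis by (rule has_sum_infsum)
qed

context setting begin

lemma U_norm_hs: "x \<in> Lam \<Longrightarrow> y \<in> Lam \<Longrightarrow>
  ((\<lambda>n. cmod (cc w n * (P n x y $ i $ j))) has_sum (\<Sum>\<^sub>\<infinity>n. cmod (cc w n * (P n x y $ i $ j)))) UNIV"
proof -
  assume xy: "x \<in> Lam" "y \<in> Lam"
  have ns: "summable (\<lambda>n. norm (cc w n * (P n x y $ i $ j)))"
  proof (rule summable_comparison_test[OF _ summable_mult2[OF summable_expK[of "\<bar>w\<bar> * K"]]])
    show "\<exists>N. \<forall>n\<ge>N. norm (norm (cc w n * P n x y $ i $ j)) \<le> (\<bar>w\<bar> * K) ^ n / fact n * exp (- real_of_int \<bar>x - y\<bar> / d)"
      using cc_P_bound[OF xy] by auto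
  qed
  show ?thesis by (rule has_sum_infsum, rule summable_nonneg_imp_summable_on[OF ns]) auto
qed

lemma U_entry_bound: "x \<in> Lam \<Longrightarrow> y \<in> Lam \<Longrightarrow>
  cmod (ker_exp Lam H w x y $ i $ j) \<le> (\<Sum>\<^sub>\<infinity>n. (\<bar>w\<bar> * K) ^ n / fact n) * exp (- real_of_int \<bar>x - y\<bar> / d)"
proof -
  assume xy: "x \<in> Lam" "y \<in> Lam"
  have "((\<lambda>n. (\<bar>w\<bar> * K) ^ n / fact n * exp (- real_of_int \<bar>x - y\<bar> / d)) has_sum
        (\<Sum>\<^sub>\<infinity>n. (\<bar>w\<bar> * K) ^ n / fact n) * exp (- real_of_int \<bar>x - y\<bar> / d)) UNIV"
    by (rule has_sum_cmult_left[OF e_hs])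
  from norm_infsum_le[OF U_hs[OF xy] this cc_P_bound[OF xy]] show ?thesis .
qed

end

context setting begin

lemma unitary_entry:
  assumes x: "x \<in> Lam" and y: "y \<in> Lam"
  shows "cmod (ker_exp Lam H w x y $ i $ j) \<le> 1"
proof -
  define u where "u z k = ker_exp Lam H w z y $ k $ j" for z k
  define r where "r = \<bar>w\<bar> * K"
  have r0: "0 \<le> r" unfolding r_def using K_pos by auto
  define e where "e n = r ^ n / fact n" for n
  define E where "E = (\<Sum>\<^sub>\<infinity>n. e n)"
  have e_hs': "(e has_sum E) UNIV" unfolding e_def E_def by (rule e_hs)
  have e0: "0 \<le> e n" for n unfolding e_def using r0 by auto
  define T where "T z p = cc (- w) (fst p) * cc w (snd p) * ((P (fst p) y z ** P (snd p) z y) $ j $ j)" for z p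
  define h where "h p = cc (- w) (fst p) * cc w (snd p) * (P (fst p + snd p) y y $ j $ j)" for p

  have A: "((T z) has_sum (\<Sum>k\<in>UNIV. cnj (u z k) * u z k)) (UNIV \<times> UNIV)" if z: "z \<in> Lam" for z
  proof -
    have each: "((\<lambda>(n, m). (cc (- w) n * (P n y z $ j $ k)) * (cc w m * (P m z y $ k $ j)))
               has_sum (cnj (u z k) * u z k)) (UNIV \<times> UNIV)" for k
    proof (rule has_sum_prod_abs)
      show "((\<lambda>m. cc w m * (P m z y $ k $ j)) has_sum u z k) UNIV"
        unfolding u_def by (rule U_hs[OF z y])
      have "((\<lambda>n. cnj (cc w n * (P n z y $ k $ j))) has_sum cnj (u z k)) UNIV"
        unfolding u_def by (rule has_sum_bounded_linear[OF bounded_linear_cnj U_hs[OF z y]])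
      moreover have "cnj (cc w n * (P n z y $ k $ j)) = cc (- w) n * (P n y z $ j $ k)" for n
        using adjP[OF y z, of n] by (simp add: cnj_cc blk_adj_def)
      ultimately show "((\<lambda>n. cc (- w) n * (P n y z $ j $ k)) has_sum cnj (u z k)) UNIV" by simp
      show "((\<lambda>n. cmod (cc (- w) n * (P n y z $ j $ k))) has_sum (\<Sum>\<^sub>\<infinity>n. cmod (cc (- w) n * (P n y z $ j $ k)))) UNIV"
        by (rule U_norm_hs[OF y z])
      show "((\<lambda>n. cmod (cc w n * (P n z y $ k $ j))) has_sum (\<Sum>\<^sub>\<infinity>n. cmod (cc w n * (P n z y $ k $ j)))) UNIV"
        by (rule U_norm_hs[OF z y])
    qed
    have "((\<lambda>p. \<Sum>k\<in>UNIV. (\<lambda>(n, m). (cc (- w) n * (P n y z $ j $ k)) * (cc w m * (P m z y $ k $ j))) p)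
          has_sum (\<Sum>k\<in>UNIV. cnj (u z k) * u z k)) (UNIV \<times> UNIV)"
      by (rule has_sum_finsum) (use each in auto)
    moreover have "(\<Sum>k\<in>UNIV. (\<lambda>(n, m). (cc (- w) n * (P n y z $ j $ k)) * (cc w m * (P m z y $ k $ j))) p) = T z p" for p
      by (cases p) (simp add: T_def matrix_matrix_mult_def sum_distrib_left mult_ac)
    ultimately show ?thesis by simp
  qed

  have Tb: "cmod (T z p) \<le> e (fst p) * e (snd p) * exp (- real_of_int \<bar>y - z\<bar> / d)" if z: "z \<in> Lam" for z p
  proof -
    obtain n m where p: "p = (n, m)" by (cases p)
    have "cmod (T z p) = (\<bar>w\<bar> ^ n / fact n) * (\<bar>w\<bar> ^ m / fact m) * cmod ((P n y z ** P m z y) $ j $ j)"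
      by (simp add: T_def p norm_mult norm_cc)
    also have "\<dots> \<le> (\<bar>w\<bar> ^ n / fact n) * (\<bar>w\<bar> ^ m / fact m) * ((K ^ n * exp (- real_of_int \<bar>y - z\<bar> / d)) * K ^ m)"
      by (intro mult_left_mono order_trans[OF blk_entry order_trans[OF blk_norm_mult]]
            mult_mono pow_bound[OF y z] pow_bound'[OF z y] blk_norm_nonneg) (use K_pos in auto)
    also have "\<dots> = e (fst p) * e (snd p) * exp (- real_of_int \<bar>y - z\<bar> / d)"
      by (simp add: p e_def r_def power_mult_distrib)
    finally show ?thesis .
  qed
  have joint: "(\<lambda>(z, p). T z p) summable_on Lam \<times> (UNIV \<times> UNIV)"
  proof -
    define F where "F q = e (fst (snd q)) * e (snd (snd q)) * exp (- real_of_int \<bar>y - fst q\<bar> / d)" for q :: "int \<times> nat \<times> nat"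
    have ee: "((\<lambda>p. e (fst p) * e (snd p)) has_sum (E * E)) (UNIV \<times> UNIV)"
      using has_sum_prod_nonneg[OF e_hs' e_hs' e0 e0] by (simp add: case_prod_beta')
    have Fs: "F summable_on (Sigma Lam (\<lambda>_. (UNIV::nat set) \<times> (UNIV::nat set)))"
    proof (rule summable_on_SigmaI[where g="\<lambda>z. E * E * exp (- real_of_int \<bar>y - z\<bar> / d)"])
      show "\<And>z. z \<in> Lam \<Longrightarrow> ((\<lambda>p. F (z, p)) has_sum (E * E * exp (- real_of_int \<bar>y - z\<bar> / d))) (UNIV \<times> UNIV)"
        unfolding F_def fst_conv snd_conv by (rule has_sum_cmult_left[OF ee])
      show "(\<lambda>z. E * E * exp (- real_of_int \<bar>y - z\<bar> / d)) summable_on Lam"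
        by (rule summable_on_cmult_right[OF geo_summ])
      show "\<And>z p. z \<in> Lam \<Longrightarrow> p \<in> UNIV \<times> UNIV \<Longrightarrow> 0 \<le> F (z, p)"
        unfolding F_def using e0 by auto
    qed
    show ?thesis
    proof (rule abs_summable_summable, rule summable_on_comparison_test[OF Fs])
      fix q assume q: "q \<in> Sigma Lam (\<lambda>_. (UNIV::nat set) \<times> (UNIV::nat set))"
      obtain z p where zp: "q = (z, p)" by (cases q)
      show "norm ((\<lambda>(z, p). T z p) q) \<le> F q"
        using Tb[of z p] q zp by (simp add: F_def)
    qed auto
  qed

  have C: "(\<Sum>\<^sub>\<infinity>z\<in>Lam. T z p) = h p" for p
  proof -
    obtain n m where p: "p = (n, m)" by (cases p)
    have S: "(\<lambda>z. P n y z ** P m z y) summable_on Lam"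
      by (rule Pprod_summ[OF y]) (rule pow_bound'[OF _ y])
    have "((\<lambda>z. (P n y z ** P m z y) $ j $ j) has_sum ((\<Sum>\<^sub>\<infinity>z\<in>Lam. P n y z ** P m z y) $ j $ j)) Lam"
      by (rule has_sum_bounded_linear[OF bl_entry has_sum_infsum[OF S]])
    then have "((\<lambda>z. T z p) has_sum (cc (- w) n * cc w m * ((\<Sum>\<^sub>\<infinity>z\<in>Lam. P n y z ** P m z y) $ j $ j))) Lam"
      unfolding T_def p fst_conv snd_conv by (rule has_sum_cmult_right)
    moreover have "(\<Sum>\<^sub>\<infinity>z\<in>Lam. P n y z ** P m z y) = P (n + m) y y" by (rule assoc[OF y y, symmetric])
    ultimately show ?thesis by (simp add: infsumI h_def p)
  qed

  have D: "(\<Sum>\<^sub>\<infinity>p\<in>UNIV \<times> UNIV. h p) = 1"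
  proof -
    have hb: "norm (h p) \<le> e (fst p) * e (snd p)" for p
    proof -
      obtain n m where p: "p = (n, m)" by (cases p)
      have "norm (h p) = (\<bar>w\<bar> ^ n / fact n) * (\<bar>w\<bar> ^ m / fact m) * cmod (P (n + m) y y $ j $ j)"
        by (simp add: h_def p norm_mult norm_cc)
      also have "\<dots> \<le> (\<bar>w\<bar> ^ n / fact n) * (\<bar>w\<bar> ^ m / fact m) * K ^ (n + m)"
        by (intro mult_left_mono order_trans[OF blk_entry pow_bound'[OF y y]]) auto
      also have "\<dots> = e (fst p) * e (snd p)"
        by (simp add: p e_def r_def power_mult_distrib power_add)
      finally show ?thesis .
    qed
    have ee: "((\<lambda>p. e (fst p) * e (snd p)) has_sum (E * E)) (UNIV \<times> UNIV)"
      using has_sum_prod_nonneg[OF e_hs' e_hs' e0 e0] by (simp add: case_prod_beta')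
    have hs: "h summable_on UNIV \<times> UNIV"
      by (rule abs_summable_summable, rule summable_on_comparison_test[of "\<lambda>p. e (fst p) * e (snd p)"])
         (use ee hb e0 in \<open>auto simp: summable_on_def\<close>)
    define \<phi> where "\<phi> q = (snd q, fst q - snd q)" for q :: "nat \<times> nat"
    have bij: "bij_betw \<phi> (Sigma UNIV (\<lambda>N. {..N})) (UNIV \<times> UNIV)"
    proof (rule bij_betwI[where g="\<lambda>p. (fst p + snd p, fst p)"])
      show "\<phi> \<in> Sigma UNIV (\<lambda>N. {..N}) \<rightarrow> UNIV \<times> UNIV" by auto
      show "(\<lambda>p::nat\<times>nat. (fst p + snd p, fst p)) \<in> UNIV \<times> UNIV \<rightarrow> Sigma (UNIV::nat set) (\<lambda>N. {..N})" by auto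
      show "\<And>q. q \<in> Sigma UNIV (\<lambda>N. {..N}) \<Longrightarrow> (fst (\<phi> q) + snd (\<phi> q), fst (\<phi> q)) = q"
        by (auto simp: \<phi>_def)
      show "\<And>p. p \<in> UNIV \<times> UNIV \<Longrightarrow> \<phi> (fst p + snd p, fst p) = p"
        by (auto simp: \<phi>_def)
    qed
    have "(\<Sum>\<^sub>\<infinity>p\<in>UNIV \<times> UNIV. h p) = (\<Sum>\<^sub>\<infinity>q\<in>Sigma UNIV (\<lambda>N. {..N}). h (\<phi> q))"
      by (rule infsum_reindex_bij_betw[OF bij, symmetric])
    also have "\<dots> = (\<Sum>\<^sub>\<infinity>N\<in>UNIV. \<Sum>\<^sub>\<infinity>i\<in>{..N}. h (\<phi> (N, i)))"
    proof -
      have "(\<lambda>q. h (\<phi> q)) summable_on Sigma UNIV (\<lambda>N. {..N})"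
        using summable_on_reindex_bij_betw[OF bij, of h] hs by simp
      then have "(\<lambda>(N, i). h (\<phi> (N, i))) summable_on Sigma UNIV (\<lambda>N. {..N})"
        by (simp add: case_prod_beta')
      from infsum_Sigma'_banach[OF this] show ?thesis by (simp add: case_prod_beta')
    qed
    also have "\<dots> = (\<Sum>\<^sub>\<infinity>N\<in>(UNIV::nat set). if N = 0 then 1 else 0)"
    proof (rule infsum_cong)
      fix N :: nat
      have "(\<Sum>\<^sub>\<infinity>i\<in>{..N}. h (\<phi> (N, i))) = (\<Sum>i\<le>N. h (\<phi> (N, i)))" by simp
      also have "\<dots> = (\<Sum>i\<le>N. cc (- w) i * cc w (N - i)) * (P N y y $ j $ j)"
        by (simp add: sum_distrib_right h_def \<phi>_def)
      also have "\<dots> = (if N = 0 then 1 else 0)"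
        by (simp add: cc_sum mat_def)
      finally show "(\<Sum>\<^sub>\<infinity>i\<in>{..N}. h (\<phi> (N, i))) = (if N = 0 then 1 else 0)" .
    qed
    also have "\<dots> = (\<Sum>\<^sub>\<infinity>N\<in>{0::nat}. if N = 0 then 1 else 0)"
      by (rule infsum_cong_neutral) auto
    finally show ?thesis by simp
  qed

  have Q: "(\<Sum>\<^sub>\<infinity>z\<in>Lam. \<Sum>k\<in>UNIV. cnj (u z k) * u z k) = 1"
  proof -
    have "(\<Sum>\<^sub>\<infinity>z\<in>Lam. \<Sum>k\<in>UNIV. cnj (u z k) * u z k) = (\<Sum>\<^sub>\<infinity>z\<in>Lam. \<Sum>\<^sub>\<infinity>p\<in>UNIV \<times> UNIV. T z p)"
    proof (rule infsum_cong)
      fix z assume z: "z \<in> Lam"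
      show "(\<Sum>k\<in>UNIV. cnj (u z k) * u z k) = (\<Sum>\<^sub>\<infinity>p\<in>UNIV \<times> UNIV. T z p)"
        by (rule infsumI[OF A[OF z], symmetric])
    qed
    also have "\<dots> = (\<Sum>\<^sub>\<infinity>p\<in>UNIV \<times> UNIV. \<Sum>\<^sub>\<infinity>z\<in>Lam. T z p)"
      by (rule infsum_swap_banach[OF joint])
    also have "\<dots> = 1" using C D by simp
    finally show ?thesis .
  qed
  define q where "q z = (\<Sum>k\<in>UNIV. (cmod (u z k))\<^sup>2)" for z
  have qc: "(\<Sum>k\<in>UNIV. cnj (u z k) * u z k) = complex_of_real (q z)" for z
    unfolding q_def of_real_sum
  proof (rule sum.cong[OF refl])
    fix k
    show "cnj (u z k) * u z k = complex_of_real ((cmod (u z k))\<^sup>2)"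
      by (subst complex_norm_square) (simp add: mult.commute)
  qed
  have qsum: "(\<lambda>z. complex_of_real (q z)) summable_on Lam"
  proof -
    have "(\<lambda>z. infsum (T z) (UNIV \<times> UNIV)) summable_on Lam"
      using summable_on_Sigma_banach[of T Lam "\<lambda>_. UNIV \<times> UNIV"] joint by simp
    moreover have "infsum (T z) (UNIV \<times> UNIV) = complex_of_real (q z)" if "z \<in> Lam" for z
      using A[OF that] qc by (simp add: infsumI)
    ultimately show ?thesis using summable_on_cong[of Lam "\<lambda>z. infsum (T z) (UNIV \<times> UNIV)" "\<lambda>z. complex_of_real (q z)"] by blast
  qed
  have qr: "q summable_on Lam"
    using summable_on_bounded_linear[OF bounded_linear_Re qsum] by simp
  have hq: "((\<lambda>z. complex_of_real (q z)) has_sum complex_of_real (infsum q Lam)) Lam"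
    by (rule has_sum_bounded_linear[OF bounded_linear_of_real has_sum_infsum[OF qr]])
  have "complex_of_real (infsum q Lam) = (\<Sum>\<^sub>\<infinity>z\<in>Lam. complex_of_real (q z))"
    using infsumI[OF hq] by simp
  also have "\<dots> = 1" using Q qc by simp
  finally have q1: "infsum q Lam = 1" by simp
  have qn: "0 \<le> q z" for z unfolding q_def by (intro sum_nonneg) auto
  have "q x = infsum q {x}" by simp
  also have "\<dots> \<le> infsum q Lam"
    by (rule infsum_mono2[OF _ qr]) (use x qn in auto)
  finally have "q x \<le> 1" using q1 by simp
  moreover have "(cmod (u x i))\<^sup>2 \<le> q x"
    unfolding q_def by (rule member_le_sum) auto
  ultimately have "(cmod (u x i))\<^sup>2 \<le> 1" by simp
  then show ?thesis unfolding u_def by (simp add: power_le_one_iff abs_square_le_1)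
qed

end

lemma exp_neg_lim: "l > 0 \<Longrightarrow> ((\<lambda>t::real. exp (- l * t)) \<longlongrightarrow> 0) at_top"
proof -
  assume l: "l > 0"
  have "LIM t at_top. (- l) * t :> at_bot"
    by (rule filterlim_tendsto_neg_mult_at_bot[OF tendsto_const _ filterlim_ident]) (use l in auto)
  from filterlim_compose[OF exp_at_bot this] show ?thesis by simp
qed

lemma nn_exp_tail:
  assumes l: "l > 0" and c: "c \<ge> 0"
  shows "(\<integral>\<^sup>+ t. ennreal (c * exp (- l * t)) * indicator {T..} t \<partial>lborel) = ennreal (c * exp (- l * T) / l)"
proof -
  have "(\<integral>\<^sup>+ t. ennreal (c * exp (- l * t)) * indicator {T..} t \<partial>lborel) = 0 - (- c / l * exp (- l * T))"
  proof (rule nn_integral_FTC_atLeast)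
    show "(\<lambda>t. c * exp (- l * t)) \<in> borel_measurable borel" by measurable
    show "\<And>t. T \<le> t \<Longrightarrow> ((\<lambda>t. - c / l * exp (- l * t)) has_real_derivative c * exp (- l * t)) (at t)"
      using l by (auto intro!: derivative_eq_intros simp: field_simps)
    show "\<And>t. T \<le> t \<Longrightarrow> 0 \<le> c * exp (- l * t)" using c by auto
    show "((\<lambda>t. - c / l * exp (- l * t)) \<longlongrightarrow> 0) at_top"
      using tendsto_mult_right_zero[OF exp_neg_lim[OF l], of "- c / l"] by simp
  qed
  then show ?thesis by simp
qed

lemma nn_reflect:
  fixes g :: "real \<Rightarrow> ennreal"
  assumes [measurable]: "g \<in> borel_measurable borel"
  shows "(\<integral>\<^sup>+ w. g \<bar>w\<bar> \<partial>lborel) \<le> 2 * (\<integral>\<^sup>+ t. g t * indicator {0..} t \<partial>lborel)"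
proof -
  have "(\<integral>\<^sup>+ w. g \<bar>w\<bar> \<partial>lborel) \<le> (\<integral>\<^sup>+ w. g w * indicator {0..} w + g (- w) * indicator {0..} (- w) \<partial>lborel)"
    by (intro nn_integral_mono) (auto simp: indicator_def)
  also have "\<dots> = (\<integral>\<^sup>+ w. g w * indicator {0..} w \<partial>lborel) + (\<integral>\<^sup>+ w. g (- w) * indicator {0..} (- w) \<partial>lborel)"
    by (rule nn_integral_add) auto
  also have "(\<integral>\<^sup>+ w. g (- w) * indicator {0..} (- w) \<partial>lborel) = (\<integral>\<^sup>+ w. g w * indicator {0..} w \<partial>lborel)"
    using nn_integral_real_affine[of "\<lambda>w. g w * indicator {0..} w" "-1" 0] by simp
  finally show ?thesis by (simp add: mult_2)
qed

lemma nn_const_interval: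
  assumes "0 \<le> T" "0 \<le> c"
  shows "(\<integral>\<^sup>+ t. ennreal c * indicator {0..T} t \<partial>lborel) = ennreal (c * T)"
  using assms by (simp add: nn_integral_cmult_indicator ennreal_mult)


lemma pi_scale: "0 \<le> s \<Longrightarrow> x \<le> s \<Longrightarrow> 0 \<le> e \<Longrightarrow> x * e \<le> pi * s * (e::real)"
proof -
  assume s: "0 \<le> s" and x: "x \<le> s" and e: "0 \<le> e"
  have "x * e \<le> s * e" using x e by (rule mult_right_mono)
  also have "\<dots> \<le> pi * s * e" using s e pi_ge_two by (intro mult_right_mono) (auto intro: mult_right_mono[of 1 pi s, simplified])
  finally show ?thesis .
qed

lemma exp_one_minus_inv_le: "1 \<le> (b::real) \<Longrightarrow> exp (1 - 1 / b) \<le> b"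
proof -
  assume b: "1 \<le> b"
  have "ln (1 / b) \<le> 1 / b - 1" by (rule ln_le_minus_one) (use b in auto)
  then have "1 - 1 / b \<le> ln b" using b by (simp add: ln_div)
  then have "exp (1 - 1 / b) \<le> exp (ln b)" by simp
  then show ?thesis using b by simp
qed

lemma ineq_i:
  assumes C: "C > 0" and be: "\<beta> > 0" and K: "K > 0" and a: "a \<ge> 0" and small: "2 * K \<le> \<beta>"
  shows "C * K * exp (- a) / (\<beta> - K) \<le> pi * C * (K / \<beta> + a) * exp (- a / max 1 (K / \<beta>))"
proof -
  have m: "max 1 (K / \<beta>) = 1" using small be K by (auto simp: field_simps)
  have "C * K * exp (- a) / (\<beta> - K) \<le> C * K * exp (- a) / (\<beta> / 2)"
    using C K be small by (intro divide_left_mono) auto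
  also have "\<dots> = 2 * C * (K / \<beta>) * exp (- a)" by (simp add: field_simps)
  also have "\<dots> \<le> pi * C * (K / \<beta> + a) * exp (- a)"
    using pi_ge_two C K be a by (intro mult_right_mono mult_mono) auto
  finally show ?thesis by (simp add: m)
qed

lemma ineq_ii_off:
  assumes C: "C > 0" and be: "\<beta> > 0" and K: "K > 0" and a: "a \<ge> 0" and big: "\<beta> < 2 * K"
  defines "T \<equiv> max a 1 / K"
  shows "C * K * exp (- a) * max 1 (exp ((K - \<beta>) * T)) * T + C * 1 / T * exp (- \<beta> * T) / \<beta>
         \<le> pi * C * (K / \<beta> + a) * exp (- a / max 1 (K / \<beta>))"
proof -
  define b where "b = K / \<beta>"
  define A where "A = max a 1"
  have b0: "b > 1 / 2" using big be unfolding b_def by (simp add: field_simps)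
  have A1: "A \<ge> 1" unfolding A_def by simp
  have Kb: "K = b * \<beta>" unfolding b_def using be by simp
  have e1: "(K - \<beta>) * T = A - A / b" unfolding T_def A_def[symmetric] Kb using be b0 by (simp add: field_simps)
  have e2: "\<beta> * T = A / b" unfolding T_def A_def[symmetric] Kb using be b0 by (simp add: field_simps)
  have LHS: "C * K * exp (- a) * max 1 (exp ((K - \<beta>) * T)) * T + C * 1 / T * exp (- \<beta> * T) / \<beta>
           = C * (A * exp (- a) * max 1 (exp (A - A / b)) + b / A * exp (- (A / b)))"
    unfolding e1 using e2 be b0 A1 K unfolding T_def A_def[symmetric]
    by (simp add: field_simps Kb)
  have pi3: "3 < pi" by (rule pi_gt3)
  have key: "A * exp (- a) * max 1 (exp (A - A / b)) + b / A * exp (- (A / b)) \<le> pi * (b + a) * exp (- a / max 1 b)"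
  proof (cases "a \<ge> 1")
    case True
    then have A: "A = a" unfolding A_def by simp
    show ?thesis
    proof (cases "b \<le> 1")
      case b1: True
      have "a - a / b \<le> 0" using True b1 b0 by (simp add: field_simps)
      then have mx: "max 1 (exp (a - a / b)) = 1" by simp
      have "a \<le> a / b" using True b1 b0 by (simp add: field_simps)
      then have "exp (- (a / b)) \<le> exp (- a)" by simp
      moreover have "b / a \<le> b" using True b0 by (simp add: field_simps)
      ultimately have "b / a * exp (- (a / b)) \<le> b * exp (- a)"
        using b0 True by (intro mult_mono) auto
      then have "A * exp (- a) * max 1 (exp (A - A / b)) + b / A * exp (- (A / b)) \<le> (a + b) * exp (- a)"
        unfolding A mx by (simp add: algebra_simps)
      also have "\<dots> \<le> pi * (b + a) * exp (- a)"
        using True b0 by (intro pi_scale) auto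
      finally show ?thesis using b1 by simp
    next
      case b1: False
      have "0 \<le> a - a / b" using True b1 by (simp add: field_simps)
      then have mx: "max 1 (exp (a - a / b)) = exp (a - a / b)" by simp
      have t1: "a * exp (- a) * exp (a - a / b) = a * exp (- (a / b))" by (simp add: exp_add[symmetric])
      have "b / a * exp (- (a / b)) \<le> b * exp (- (a / b))"
        using True b1 by (intro mult_right_mono) (auto simp: field_simps)
      then have "A * exp (- a) * max 1 (exp (A - A / b)) + b / A * exp (- (A / b)) \<le> (a + b) * exp (- (a / b))"
        unfolding A mx t1 by (simp add: algebra_simps)
      also have "\<dots> \<le> pi * (b + a) * exp (- (a / b))"
        using True b1 by (intro pi_scale) auto
      finally show ?thesis using b1 by simp
    qed
  next
    case False
    then have A: "A = 1" unfolding A_def by simp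
    show ?thesis
    proof (cases "b \<le> 1")
      case b1: True
      have "1 - 1 / b \<le> 0" using b1 b0 by (simp add: field_simps)
      then have mx: "max 1 (exp (1 - 1 / b)) = 1" by simp
      have "a \<le> 1 / b"
      proof -
        have "a * b \<le> 1" using mult_le_one[of a b] False b1 a b0 by auto
        then show ?thesis using b0 by (simp add: field_simps)
      qed
      then have "exp (- (1 / b)) \<le> exp (- a)" by simp
      then have "b * exp (- (1 / b)) \<le> b * exp (- a)" using b0 by simp
      then have "A * exp (- a) * max 1 (exp (A - A / b)) + b / A * exp (- (A / b)) \<le> (1 + b) * exp (- a)"
        unfolding A mx by (simp add: algebra_simps)
      also have "\<dots> \<le> pi * (b + a) * exp (- a)"
      proof (intro mult_right_mono)
        have "1 + b \<le> 3 * b" using b0 by simp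
        also have "\<dots> \<le> pi * b" using pi3 b0 by simp
        also have "\<dots> \<le> pi * (b + a)" using a pi3 by simp
        finally show "1 + b \<le> pi * (b + a)" .
      qed auto
      finally show ?thesis using b1 by simp
    next
      case b1: False
      have "exp (- a) \<le> exp (- (a / b))"
      proof -
        have "a * 1 \<le> a * b" using b1 a by (intro mult_left_mono) auto
        then have "a / b \<le> a" using b1 by (simp add: field_simps)
        then show ?thesis by simp
      qed
      moreover have "exp (1 - 1 / b) \<le> b" by (rule exp_one_minus_inv_le) (use b1 in simp)
      moreover have "1 \<le> exp (1 - 1 / b)" using b1 by (simp add: field_simps)
      ultimately have t1: "exp (- a) * max 1 (exp (1 - 1 / b)) \<le> exp (- (a / b)) * b"
        by (intro mult_mono) auto
      have "a \<le> 1" using False by simp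
      then have "a / b \<le> 1 / b" using b1 by (simp add: divide_right_mono)
      then have "exp (- (1 / b)) \<le> exp (- (a / b))" by simp
      then have t2: "b * exp (- (1 / b)) \<le> b * exp (- (a / b))" using b1 by simp
      have "A * exp (- a) * max 1 (exp (A - A / b)) + b / A * exp (- (A / b)) \<le> 2 * b * exp (- (a / b))"
        using t1 t2 unfolding A by (simp add: algebra_simps)
      also have "\<dots> \<le> pi * (b + a) * exp (- (a / b))"
      proof -
        have "2 * b * exp (- (a / b)) \<le> 3 * b * exp (- (a / b))" using b1 by simp
        also have "\<dots> \<le> pi * (b + a) * exp (- (a / b))"
          using pi3 b1 a by (intro mult_right_mono mult_mono) auto
        finally show ?thesis .
      qed
      finally show ?thesis using b1 by simp
    qed
  qed
  show ?thesis unfolding LHS b_def[symmetric] using mult_left_mono[OF key, of C] C by (simp add: mult_ac)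
qed

lemma ineq_ii_diag:
  assumes C: "C > 0" and be: "\<beta> > 0" and K: "K > 0" and big: "\<beta> < 2 * K"
  defines "T \<equiv> max 0 1 / K"
  shows "C * K * exp (- 0) * max 1 (exp ((K - \<beta>) * T)) * T + C * 2 / T * exp (- \<beta> * T) / \<beta>
         \<le> pi * C * (K / \<beta>)"
proof -
  define b where "b = K / \<beta>"
  have b0: "b > 1 / 2" using big be unfolding b_def by (simp add: field_simps)
  have Kb: "K = b * \<beta>" unfolding b_def using be by simp
  have e1: "(K - \<beta>) * T = 1 - 1 / b" unfolding T_def Kb using be b0 by (simp add: field_simps)
  have e2: "\<beta> * T = 1 / b" unfolding T_def Kb using be b0 by (simp add: field_simps)
  have e3: "C * K * exp (- 0) * max 1 (exp ((K - \<beta>) * T)) * T = C * max 1 (exp (1 - 1 / b))"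
    unfolding e1 unfolding T_def using K by simp
  have e4: "C * 2 / T * exp (- \<beta> * T) / \<beta> = C * (2 * b * exp (- (1 / b)))"
    unfolding e2[unfolded mult.commute[of \<beta>]] mult_minus_left[symmetric] using be b0 K
    unfolding T_def by (simp add: field_simps Kb e2)
  have LHS: "C * K * exp (- 0) * max 1 (exp ((K - \<beta>) * T)) * T + C * 2 / T * exp (- \<beta> * T) / \<beta>
           = C * (max 1 (exp (1 - 1 / b)) + 2 * b * exp (- (1 / b)))"
    unfolding e3 e4 by (simp add: algebra_simps)
  have pi3: "3 < pi" by (rule pi_gt3)
  have key: "max 1 (exp (1 - 1 / b)) + 2 * b * exp (- (1 / b)) \<le> pi * b"
  proof (cases "b \<le> 1")
    case True
    have "1 - 1 / b \<le> 0" using True b0 by (simp add: field_simps)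
    then have mx: "max 1 (exp (1 - 1 / b)) = 1" by simp
    have "1 \<le> 1 / b" using True b0 by (simp add: field_simps)
    then have "exp (- (1 / b)) \<le> exp (- 1)" by simp
    also have "exp (- 1) \<le> (1 / 2 :: real)"
    proof -
      have "2 \<le> exp (1::real)" using exp_ge_add_one_self[of 1] by simp
      then show ?thesis by (simp add: exp_minus field_simps)
    qed
    finally have "2 * b * exp (- (1 / b)) \<le> 2 * b * (1 / 2)" using b0 by (intro mult_left_mono) auto
    then have "max 1 (exp (1 - 1 / b)) + 2 * b * exp (- (1 / b)) \<le> 1 + b" unfolding mx by simp
    also have "\<dots> \<le> 3 * b" using b0 by simp
    also have "\<dots> \<le> pi * b" using pi3 b0 by simp
    finally show ?thesis .
  next
    case False
    have "max 1 (exp (1 - 1 / b)) \<le> b"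
      using exp_one_minus_inv_le[of b] False by simp
    moreover have "2 * b * exp (- (1 / b)) \<le> 2 * b" using False by simp
    ultimately have "max 1 (exp (1 - 1 / b)) + 2 * b * exp (- (1 / b)) \<le> 3 * b" by linarith
    also have "\<dots> \<le> pi * b" using pi3 False by simp
    finally show ?thesis .
  qed
  show ?thesis unfolding LHS b_def[symmetric] using mult_left_mono[OF key, of C] C by (simp add: mult_ac)
qed


definition Bf :: "real \<Rightarrow> real \<Rightarrow> real \<Rightarrow> real \<Rightarrow> real \<Rightarrow> real \<Rightarrow> real" where
  "Bf C \<beta> K a M t = (if t \<le> 0 then 0 else C * exp (- \<beta> * t) / t * min M ((exp (K * t) - 1) * exp (- a)))"

lemma Bf_nonneg: "C \<ge> 0 \<Longrightarrow> K \<ge> 0 \<Longrightarrow> M \<ge> 0 \<Longrightarrow> 0 \<le> Bf C \<beta> K a M t"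
  unfolding Bf_def by (auto intro!: mult_nonneg_nonneg divide_nonneg_nonneg)

lemma two_ennreal_le: "0 \<le> x \<Longrightarrow> x \<le> y \<Longrightarrow> 2 * ennreal x \<le> ennreal (2 * y)"
proof -
  assume x: "0 \<le> x" and xy: "x \<le> y"
  have "2 * ennreal x = ennreal (2 * x)" using x by (simp add: ennreal_mult)
  also have "\<dots> \<le> ennreal (2 * y)" using xy by (intro ennreal_leI) simp
  finally show ?thesis .
qed

lemma Bf_eq: "t > 0 \<Longrightarrow> Bf C \<beta> K a M t = (C * exp (- \<beta> * t) / t) * min M ((exp (K * t) - 1) * exp (- a))"
  by (simp add: Bf_def)

lemma Bf_le1:
  assumes "C \<ge> 0" "K \<ge> 0" "M \<ge> 0" "t > 0"
  shows "Bf C \<beta> K a M t \<le> C * K * exp (- a) * exp ((K - \<beta>) * t)"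
proof -
  have h1: "exp (K * t) - 1 \<le> K * t * exp (K * t)"
  proof -
    have "1 + - (K * t) \<le> exp (- (K * t))" by (rule exp_ge_add_one_self)
    then have "(1 - K * t) * exp (K * t) \<le> exp (- (K * t)) * exp (K * t)" by (intro mult_right_mono) auto
    then show ?thesis by (simp add: exp_minus field_simps)
  qed
  have "Bf C \<beta> K a M t \<le> C * exp (- \<beta> * t) / t * ((exp (K * t) - 1) * exp (- a))"
    unfolding Bf_eq[OF \<open>t > 0\<close>] using assms by (intro mult_left_mono divide_nonneg_nonneg) auto
  also have "\<dots> \<le> C * exp (- \<beta> * t) / t * ((K * t * exp (K * t)) * exp (- a))"
    using assms h1 by (intro mult_left_mono mult_right_mono divide_nonneg_nonneg) auto
  also have "\<dots> = C * K * exp (- a) * exp ((K - \<beta>) * t)"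
    using assms by (simp add: field_simps exp_add[symmetric] left_diff_distrib)
  finally show ?thesis .
qed

lemma Bf_le2:
  assumes "C \<ge> 0" "K \<ge> 0" "M \<ge> 0" "t \<ge> T" "T > 0"
  shows "Bf C \<beta> K a M t \<le> C * M / T * exp (- \<beta> * t)"
proof -
  have t: "t > 0" using assms by simp
  have "Bf C \<beta> K a M t \<le> C * exp (- \<beta> * t) / t * M"
    unfolding Bf_eq[OF t] using assms t by (intro mult_left_mono divide_nonneg_nonneg) auto
  also have "\<dots> \<le> C * exp (- \<beta> * t) / T * M"
    using assms by (intro mult_right_mono divide_left_mono) auto
  finally show ?thesis by (simp add: field_simps)
qed

lemma Bf_integral:
  assumes C: "C > 0" and be: "\<beta> > 0" and K: "K > 0" and a: "a \<ge> 0"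
    and M: "M = 1 \<or> (M = 2 \<and> a = 0)"
  shows "(\<integral>\<^sup>+ w. ennreal (Bf C \<beta> K a M \<bar>w\<bar>) \<partial>lborel)
          \<le> ennreal (2 * (pi * C * (K / \<beta> + a) * exp (- a / max 1 (K / \<beta>))))"
proof -
  have M0: "M \<ge> 0" using M by auto
  show ?thesis
  proof (cases "2 * K \<le> \<beta>")
    case True
    define G where "G t = C * K * exp (- a) * exp (- (\<beta> - K) * t)" for t
    have "(\<integral>\<^sup>+ w. ennreal (Bf C \<beta> K a M \<bar>w\<bar>) \<partial>lborel) \<le> (\<integral>\<^sup>+ w. ennreal (G \<bar>w\<bar>) \<partial>lborel)"
    proof (intro nn_integral_mono ennreal_leI)
      fix w :: real
      show "Bf C \<beta> K a M \<bar>w\<bar> \<le> G \<bar>w\<bar>"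
      proof (cases "w = 0")
        case True then show ?thesis using C K by (simp add: Bf_def G_def)
      next
        case False
        then show ?thesis using Bf_le1[of C K M "\<bar>w\<bar>" \<beta> a] C K M0 by (simp add: G_def algebra_simps)
      qed
    qed
    also have "\<dots> \<le> 2 * (\<integral>\<^sup>+ t. ennreal (G t) * indicator {0..} t \<partial>lborel)"
      by (rule nn_reflect) (simp add: G_def)
    also have "(\<integral>\<^sup>+ t. ennreal (G t) * indicator {0..} t \<partial>lborel) = ennreal (C * K * exp (- a) * exp (- (\<beta> - K) * 0) / (\<beta> - K))"
      unfolding G_def by (rule nn_exp_tail) (use True C K in auto)
    also have "2 * ennreal (C * K * exp (- a) * exp (- (\<beta> - K) * 0) / (\<beta> - K))
              \<le> ennreal (2 * (pi * C * (K / \<beta> + a) * exp (- a / max 1 (K / \<beta>))))"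
    proof -
      have "C * K * exp (- a) / (\<beta> - K) \<le> pi * C * (K / \<beta> + a) * exp (- a / max 1 (K / \<beta>))"
        by (rule ineq_i[OF C be K a True])
      then show ?thesis by (intro two_ennreal_le) (use C K True in auto)
    qed
    finally show ?thesis .
  next
    case False
    then have big: "\<beta> < 2 * K" by simp
    define T where "T = max a 1 / K"
    have T0: "T > 0" unfolding T_def using K by simp
    define c1 where "c1 = C * K * exp (- a) * max 1 (exp ((K - \<beta>) * T))"
    have c10: "c1 \<ge> 0" unfolding c1_def using C K by simp
    define G where "G t = ennreal c1 * indicator {0..T} t + ennreal (C * M / T * exp (- \<beta> * t)) * indicator {T..} t" for t
    have "(\<integral>\<^sup>+ w. ennreal (Bf C \<beta> K a M \<bar>w\<bar>) \<partial>lborel) \<le> (\<integral>\<^sup>+ w. G \<bar>w\<bar> \<partial>lborel)"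
    proof (intro nn_integral_mono)
      fix w :: real
      show "ennreal (Bf C \<beta> K a M \<bar>w\<bar>) \<le> G \<bar>w\<bar>"
      proof (cases "\<bar>w\<bar> \<le> T")
        case True
        show ?thesis
        proof (cases "w = 0")
          case True then show ?thesis by (simp add: Bf_def)
        next
          case w0: False
          have "Bf C \<beta> K a M \<bar>w\<bar> \<le> C * K * exp (- a) * exp ((K - \<beta>) * \<bar>w\<bar>)"
            by (rule Bf_le1) (use C K M0 w0 in auto)
          also have "\<dots> \<le> c1" unfolding c1_def
          proof (intro mult_left_mono)
            show "exp ((K - \<beta>) * \<bar>w\<bar>) \<le> max 1 (exp ((K - \<beta>) * T))"
            proof (cases "K \<le> \<beta>")
              case True
              then have "(K - \<beta>) * \<bar>w\<bar> \<le> 0" by (simp add: mult_nonpos_nonneg)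
              then have "exp ((K - \<beta>) * \<bar>w\<bar>) \<le> 1" by simp
              then show ?thesis by (rule order_trans[OF _ max.cobounded1])
            next
              case False
              then have "(K - \<beta>) * \<bar>w\<bar> \<le> (K - \<beta>) * T" using \<open>\<bar>w\<bar> \<le> T\<close> by (intro mult_left_mono) auto
              then have "exp ((K - \<beta>) * \<bar>w\<bar>) \<le> exp ((K - \<beta>) * T)" by simp
              then show ?thesis by (rule order_trans[OF _ max.cobounded2])
            qed
          qed (use C K in auto)
          finally have "ennreal (Bf C \<beta> K a M \<bar>w\<bar>) \<le> ennreal c1" by (rule ennreal_leI)
          also have "ennreal c1 \<le> G \<bar>w\<bar>" using True by (auto simp: G_def intro: add_increasing2)
          finally show ?thesis .
        qed
      next
        case False
        have "Bf C \<beta> K a M \<bar>w\<bar> \<le> C * M / T * exp (- \<beta> * \<bar>w\<bar>)"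
          by (rule Bf_le2) (use C K M0 False T0 in auto)
        then show ?thesis using False by (simp add: G_def ennreal_leI)
      qed
    qed
    also have "\<dots> \<le> 2 * (\<integral>\<^sup>+ t. G t * indicator {0..} t \<partial>lborel)"
      by (rule nn_reflect) (simp add: G_def)
    also have "(\<integral>\<^sup>+ t. G t * indicator {0..} t \<partial>lborel) \<le> (\<integral>\<^sup>+ t. G t \<partial>lborel)"
      by (intro nn_integral_mono) (auto simp: indicator_def)
    also have "(\<integral>\<^sup>+ t. G t \<partial>lborel) = (\<integral>\<^sup>+ t. ennreal c1 * indicator {0..T} t \<partial>lborel)
        + (\<integral>\<^sup>+ t. ennreal (C * M / T * exp (- \<beta> * t)) * indicator {T..} t \<partial>lborel)"
      unfolding G_def by (rule nn_integral_add) auto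
    also have "\<dots> = ennreal (c1 * T) + ennreal (C * M / T * exp (- \<beta> * T) / \<beta>)"
      using nn_const_interval[of T c1] nn_exp_tail[of \<beta> "C * M / T" T] T0 c10 be C M0 by simp
    also have "2 * (ennreal (c1 * T) + ennreal (C * M / T * exp (- \<beta> * T) / \<beta>))
               \<le> ennreal (2 * (pi * C * (K / \<beta> + a) * exp (- a / max 1 (K / \<beta>))))"
    proof -
      have r: "c1 * T + C * M / T * exp (- \<beta> * T) / \<beta> \<le> pi * C * (K / \<beta> + a) * exp (- a / max 1 (K / \<beta>))"
        using M
      proof
        assume "M = 1"
        then show ?thesis using ineq_ii_off[OF C be K a big] unfolding c1_def T_def by simp
      next
        assume Ma: "M = 2 \<and> a = 0"
        then show ?thesis using ineq_ii_diag[OF C be K big] unfolding c1_def T_def by simp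
      qed
      have "ennreal (c1 * T) + ennreal (C * M / T * exp (- \<beta> * T) / \<beta>)
          = ennreal (c1 * T + C * M / T * exp (- \<beta> * T) / \<beta>)"
        by (rule ennreal_plus[symmetric]) (use c10 T0 C M0 be in auto)
      moreover have "2 * ennreal (c1 * T + C * M / T * exp (- \<beta> * T) / \<beta>)
          \<le> ennreal (2 * (pi * C * (K / \<beta> + a) * exp (- a / max 1 (K / \<beta>))))"
        by (rule two_ennreal_le[OF _ r]) (use c10 T0 C M0 be in auto)
      ultimately show ?thesis by simp
    qed
    finally show ?thesis by (simp add: mult_left_mono)
  qed
qed


lemma exp_hs: "((\<lambda>n. r ^ n / fact n :: real) has_sum exp r) UNIV" if "r \<ge> 0"
proof (rule sums_nonneg_imp_has_sum)
  show "(\<lambda>n. r ^ n / fact n) sums exp r"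
    using exp_converges[of r] by (simp add: divide_inverse mult.commute scaleR_conv_of_real)
  show "\<And>n. 0 \<le> r ^ n / fact n" using that by simp
qed

context setting begin

lemma U_minus:
  assumes xy: "x \<in> Lam" "y \<in> Lam"
  shows "cmod (ker_exp Lam H w x y $ i $ j - P 0 x y $ i $ j) \<le> (exp (\<bar>w\<bar> * K) - 1) * exp (- real_of_int \<bar>x - y\<bar> / d)"
proof -
  define g where "g n = cc w n * (P n x y $ i $ j)" for n
  define r where "r = \<bar>w\<bar> * K"
  have r0: "r \<ge> 0" unfolding r_def using K_pos by simp
  have hs: "(g has_sum ker_exp Lam H w x y $ i $ j) UNIV" unfolding g_def by (rule U_hs[OF xy])
  have h0: "(g has_sum g 0) {0}" using has_sum_finite[of "{0::nat}" g] by simp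
  have g0: "g 0 = P 0 x y $ i $ j" by (simp add: g_def cc_def)
  have hsD: "(g has_sum (ker_exp Lam H w x y $ i $ j - P 0 x y $ i $ j)) (UNIV - {0})"
    using has_sum_Diff[OF hs h0] g0 by simp
  define e where "e n = r ^ n / fact n * exp (- real_of_int \<bar>x - y\<bar> / d)" for n
  have eh: "(e has_sum (exp r * exp (- real_of_int \<bar>x - y\<bar> / d))) UNIV"
    unfolding e_def by (rule has_sum_cmult_left[OF exp_hs[OF r0]])
  have e0: "(e has_sum e 0) {0}" using has_sum_finite[of "{0::nat}" e] by simp
  have ehD: "(e has_sum ((exp r - 1) * exp (- real_of_int \<bar>x - y\<bar> / d))) (UNIV - {0})"
    using has_sum_Diff[OF eh e0] by (simp add: e_def algebra_simps)
  have "cmod (ker_exp Lam H w x y $ i $ j - P 0 x y $ i $ j) \<le> (exp r - 1) * exp (- real_of_int \<bar>x - y\<bar> / d)"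
    by (rule norm_infsum_le[OF hsD ehD]) (unfold g_def e_def r_def, rule cc_P_bound[OF xy])
  then show ?thesis by (simp add: r_def)
qed

lemma U_zero: "x \<in> Lam \<Longrightarrow> y \<in> Lam \<Longrightarrow> ker_exp Lam H 0 x y $ i $ j = P 0 x y $ i $ j"
  using U_minus[of x y 0 i j] by simp

lemma U_meas: "x \<in> Lam \<Longrightarrow> y \<in> Lam \<Longrightarrow> (\<lambda>w. ker_exp Lam H w x y $ i $ j) \<in> borel_measurable borel"
proof -
  assume xy: "x \<in> Lam" "y \<in> Lam"
  define p where "p n = P n x y $ i $ j" for n
  show ?thesis
  proof (rule borel_measurable_LIMSEQ_metric[where f="\<lambda>N w. \<Sum>n<N. cc w n * p n"])
    show "(\<lambda>w. \<Sum>n<N. cc w n * p n) \<in> borel_measurable borel" for N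
      unfolding cc_def by measurable
    fix w :: real
    have "(\<lambda>n. cc w n * p n) sums (ker_exp Lam H w x y $ i $ j)"
      unfolding p_def by (rule has_sum_imp_sums[OF U_hs[OF xy]])
    then show "(\<lambda>N. \<Sum>n<N. cc w n * p n) \<longlonglongrightarrow> ker_exp Lam H w x y $ i $ j"
      by (simp add: sums_def)
  qed
qed

end

locale fsetting = setting +
  fixes f :: "real \<Rightarrow> real" and fhat :: "real \<Rightarrow> complex" and \<beta> C\<beta> :: real
  assumes fhat_meas: "fhat \<in> borel_measurable borel"
    and fourier: "\<forall>E. ((\<lambda>\<epsilon>. LINT w:{w. \<epsilon> \<le> \<bar>w\<bar>}|lborel. fhat w * exp (\<i> * complex_of_real (w * E)))
                       \<longlongrightarrow> complex_of_real (2 * pi * f E)) (at_right 0)"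
    and \<beta>_pos: "\<beta> > 0" and C\<beta>_pos: "C\<beta> > 0"
    and fhat_decay: "\<forall>w. cmod (fhat w * complex_of_real w) \<le> C\<beta> * exp (- \<beta> * \<bar>w\<bar>)"
begin

lemma fhat_bound: "w \<noteq> 0 \<Longrightarrow> cmod (fhat w) \<le> C\<beta> * exp (- \<beta> * \<bar>w\<bar>) / \<bar>w\<bar>"
proof -
  assume w: "w \<noteq> 0"
  have "cmod (fhat w) * \<bar>w\<bar> \<le> C\<beta> * exp (- \<beta> * \<bar>w\<bar>)"
    using fhat_decay[rule_format, of w] by (simp add: norm_mult)
  then show ?thesis using w by (simp add: field_simps)
qed

lemma fhat_set_integrable:
  assumes e: "\<epsilon> > 0"
  shows "set_integrable lborel {w. \<epsilon> \<le> \<bar>w\<bar>} fhat"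
  unfolding set_integrable_def
proof (rule integrableI_bounded)
  have [measurable]: "{w::real. \<epsilon> \<le> \<bar>w\<bar>} \<in> sets borel" by measurable
  note [measurable] = fhat_meas
  show "(\<lambda>w. indicator {w. \<epsilon> \<le> \<bar>w\<bar>} w *\<^sub>R fhat w) \<in> borel_measurable lborel" by measurable
  have "(\<integral>\<^sup>+ w. ennreal (norm (indicator {w. \<epsilon> \<le> \<bar>w\<bar>} w *\<^sub>R fhat w)) \<partial>lborel)
        \<le> (\<integral>\<^sup>+ w. ennreal (C\<beta> / \<epsilon> * exp (- \<beta> * \<bar>w\<bar>)) \<partial>lborel)"
  proof (intro nn_integral_mono ennreal_leI)
    fix w :: real
    show "norm (indicator {w. \<epsilon> \<le> \<bar>w\<bar>} w *\<^sub>R fhat w) \<le> C\<beta> / \<epsilon> * exp (- \<beta> * \<bar>w\<bar>)"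
    proof (cases "\<epsilon> \<le> \<bar>w\<bar>")
      case True
      then have w: "w \<noteq> 0" using e by auto
      have "cmod (fhat w) \<le> C\<beta> * exp (- \<beta> * \<bar>w\<bar>) / \<bar>w\<bar>" by (rule fhat_bound[OF w])
      also have "\<dots> \<le> C\<beta> * exp (- \<beta> * \<bar>w\<bar>) / \<epsilon>"
        using True e C\<beta>_pos by (intro divide_left_mono) auto
      finally show ?thesis using True by simp
    next
      case False then show ?thesis using C\<beta>_pos e by simp
    qed
  qed
  also have "\<dots> \<le> 2 * (\<integral>\<^sup>+ t. ennreal (C\<beta> / \<epsilon> * exp (- \<beta> * t)) * indicator {0..} t \<partial>lborel)"
    by (rule nn_reflect) simp
  also have "(\<integral>\<^sup>+ t. ennreal (C\<beta> / \<epsilon> * exp (- \<beta> * t)) * indicator {0..} t \<partial>lborel) = ennreal (C\<beta> / \<epsilon> * exp (- \<beta> * 0) / \<beta>)"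
    by (rule nn_exp_tail) (use \<beta>_pos C\<beta>_pos e in auto)
  also have "2 * ennreal (C\<beta> / \<epsilon> * exp (- \<beta> * 0) / \<beta>) < \<infinity>"
    by (simp add: ennreal_mult_less_top)
  finally show "(\<integral>\<^sup>+ w. ennreal (norm (indicator {w. \<epsilon> \<le> \<bar>w\<bar>} w *\<^sub>R fhat w)) \<partial>lborel) < \<infinity>" .
qed

end

context fsetting begin

lemma entry_bound:
  assumes x: "x \<in> Lam" and y: "y \<in> Lam"
  defines "a \<equiv> real_of_int \<bar>x - y\<bar> / d"
  shows "cmod (weyl_calc fhat Lam H x y $ i $ j)
         \<le> (if x = y \<and> i = j then \<bar>f 0\<bar> else 0) + C\<beta> * (K / \<beta> + a) * exp (- a / max 1 (K / \<beta>))"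
proof -
  have a0: "a \<ge> 0" unfolding a_def using d_pos by simp
  define M :: real where "M = (if x = y then 2 else 1)"
  have MR: "M = 1 \<or> (M = 2 \<and> a = 0)" unfolding M_def a_def by auto
  have M0: "M \<ge> 0" unfolding M_def by simp
  define R where "R = pi * C\<beta> * (K / \<beta> + a) * exp (- a / max 1 (K / \<beta>))"
  have R0: "R \<ge> 0" unfolding R_def using C\<beta>_pos K_pos \<beta>_pos a0 by simp
  have Bint: "(\<integral>\<^sup>+ w. ennreal (Bf C\<beta> \<beta> K a M \<bar>w\<bar>) \<partial>lborel) \<le> ennreal (2 * R)"
    unfolding R_def by (rule Bf_integral[OF C\<beta>_pos \<beta>_pos K_pos a0 MR])
  define \<delta> where "\<delta> = P 0 x y $ i $ j"
  have \<delta>v: "\<delta> = (if x = y \<and> i = j then 1 else 0)" by (simp add: \<delta>_def mat_def)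
  define D where "D w = fhat w * (ker_exp Lam H w x y $ i $ j - \<delta>)" for w
  note [measurable] = fhat_meas U_meas[OF x y]
  have Dm[measurable]: "D \<in> borel_measurable borel" unfolding D_def by measurable
  have Db: "cmod (D w) \<le> Bf C\<beta> \<beta> K a M \<bar>w\<bar>" for w
  proof (cases "w = 0")
    case True
    then show ?thesis using U_zero[OF x y] by (simp add: D_def \<delta>_def Bf_def)
  next
    case False
    have U1: "cmod (ker_exp Lam H w x y $ i $ j - \<delta>) \<le> (exp (K * \<bar>w\<bar>) - 1) * exp (- a)"
      using U_minus[OF x y, of w i j] unfolding \<delta>_def a_def by (simp add: mult.commute)
    have U2: "cmod (ker_exp Lam H w x y $ i $ j - \<delta>) \<le> M"
    proof (cases "x = y")
      case True
      have "cmod (ker_exp Lam H w x y $ i $ j - \<delta>) \<le> cmod (ker_exp Lam H w x y $ i $ j) + cmod \<delta>"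
        by (rule norm_triangle_ineq4)
      also have "\<dots> \<le> 1 + 1" using unitary_entry[OF x y, of w i j] by (intro add_mono) (auto simp: \<delta>v)
      finally show ?thesis using True by (simp add: M_def)
    next
      case False
      then show ?thesis using unitary_entry[OF x y, of w i j] by (simp add: \<delta>v M_def)
    qed
    have "cmod (D w) = cmod (fhat w) * cmod (ker_exp Lam H w x y $ i $ j - \<delta>)"
      by (simp add: D_def norm_mult)
    also have "\<dots> \<le> (C\<beta> * exp (- \<beta> * \<bar>w\<bar>) / \<bar>w\<bar>) * min M ((exp (K * \<bar>w\<bar>) - 1) * exp (- a))"
      by (intro mult_mono fhat_bound False) (use U1 U2 C\<beta>_pos in auto)
    also have "\<dots> = Bf C\<beta> \<beta> K a M \<bar>w\<bar>" using False by (simp add: Bf_def)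
    finally show ?thesis .
  qed
  have D0: "D 0 = 0" using Db[of 0] by (simp add: Bf_def)
  have Dnn: "(\<integral>\<^sup>+ w. ennreal (norm (D w)) \<partial>lborel) \<le> ennreal (2 * R)"
    by (rule order_trans[OF nn_integral_mono Bint]) (simp add: Db ennreal_leI)
  have Dint: "integrable lborel D"
  proof (rule integrableI_bounded)
    show "D \<in> borel_measurable lborel" by simp
    have "ennreal (2 * R) < \<infinity>" by simp
    then show "(\<integral>\<^sup>+ w. ennreal (norm (D w)) \<partial>lborel) < \<infinity>" using Dnn by (rule le_less_trans[rotated])
  qed
  have DI: "cmod (integral\<^sup>L lborel D) \<le> 2 * R"
  proof -
    have "ennreal (cmod (integral\<^sup>L lborel D)) \<le> ennreal (2 * R)"
      by (rule order_trans[OF integral_norm_bound_ennreal[OF Dint] Dnn])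
    then show ?thesis using R0 by (simp add: ennreal_le_iff)
  qed
  have split: "(LINT w:{w. \<epsilon> \<le> \<bar>w\<bar>}|lborel. fhat w * ker_exp Lam H w x y $ i $ j)
      = \<delta> * (LINT w:{w. \<epsilon> \<le> \<bar>w\<bar>}|lborel. fhat w * exp (\<i> * complex_of_real (w * 0)))
        + (LINT w:{w. \<epsilon> \<le> \<bar>w\<bar>}|lborel. D w)" if e: "\<epsilon> > 0" for \<epsilon>
  proof -
    have [measurable]: "{w::real. \<epsilon> \<le> \<bar>w\<bar>} \<in> sets borel" by measurable
    have i1: "set_integrable lborel {w. \<epsilon> \<le> \<bar>w\<bar>} (\<lambda>w. \<delta> * (fhat w * exp (\<i> * complex_of_real (w * 0))))"
      using fhat_set_integrable[OF e] by simp
    have i2: "set_integrable lborel {w. \<epsilon> \<le> \<bar>w\<bar>} D"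
      unfolding set_integrable_def by (rule integrable_mult_indicator) (use Dint in auto)
    have "(LINT w:{w. \<epsilon> \<le> \<bar>w\<bar>}|lborel. fhat w * ker_exp Lam H w x y $ i $ j)
        = (LINT w:{w. \<epsilon> \<le> \<bar>w\<bar>}|lborel. \<delta> * (fhat w * exp (\<i> * complex_of_real (w * 0))) + D w)"
      by (rule arg_cong[where f="\<lambda>g. LINT w:{w. \<epsilon> \<le> \<bar>w\<bar>}|lborel. g w"]) (auto simp: D_def fun_eq_iff algebra_simps)
    also have "\<dots> = (LINT w:{w. \<epsilon> \<le> \<bar>w\<bar>}|lborel. \<delta> * (fhat w * exp (\<i> * complex_of_real (w * 0))))
        + (LINT w:{w. \<epsilon> \<le> \<bar>w\<bar>}|lborel. D w)"
      by (rule set_integral_add(2)[OF i1 i2])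
    also have "(LINT w:{w. \<epsilon> \<le> \<bar>w\<bar>}|lborel. \<delta> * (fhat w * exp (\<i> * complex_of_real (w * 0))))
        = \<delta> * (LINT w:{w. \<epsilon> \<le> \<bar>w\<bar>}|lborel. fhat w * exp (\<i> * complex_of_real (w * 0)))"
      by (rule set_integral_mult_right)
    finally show ?thesis .
  qed
  have lim1: "((\<lambda>\<epsilon>. \<delta> * (LINT w:{w. \<epsilon> \<le> \<bar>w\<bar>}|lborel. fhat w * exp (\<i> * complex_of_real (w * 0))))
      \<longlongrightarrow> \<delta> * complex_of_real (2 * pi * f 0)) (at_right 0)"
    by (rule tendsto_mult_left[OF fourier[rule_format, of 0]])
  have lim2: "((\<lambda>\<epsilon>. LINT w:{w. \<epsilon> \<le> \<bar>w\<bar>}|lborel. D w) \<longlongrightarrow> integral\<^sup>L lborel D) (at_right 0)"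
  proof (rule tendsto_at_right_sequentially[where b=1])
    fix S :: "nat \<Rightarrow> real"
    assume S0: "\<And>n. 0 < S n" and S1: "\<And>n. S n < 1" and Sd: "decseq S" and Sl: "S \<longlonglongrightarrow> 0"
    show "(\<lambda>n. LINT w:{w. S n \<le> \<bar>w\<bar>}|lborel. D w) \<longlonglongrightarrow> integral\<^sup>L lborel D"
      unfolding set_lebesgue_integral_def
    proof (rule integral_dominated_convergence[where w="\<lambda>w. norm (D w)"])
      show "D \<in> borel_measurable lborel" by simp
      show "\<And>n. (\<lambda>w. indicator {w. S n \<le> \<bar>w\<bar>} w *\<^sub>R D w) \<in> borel_measurable lborel" by measurable
      show "integrable lborel (\<lambda>w. norm (D w))" using Dint by simp
      show "\<And>n. AE w in lborel. norm (indicator {w. S n \<le> \<bar>w\<bar>} w *\<^sub>R D w) \<le> norm (D w)"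
        by (auto simp: indicator_def)
      show "AE w in lborel. (\<lambda>n. indicator {w. S n \<le> \<bar>w\<bar>} w *\<^sub>R D w) \<longlonglongrightarrow> D w"
      proof (rule AE_I2)
        fix w :: real
        show "(\<lambda>n. indicator {w. S n \<le> \<bar>w\<bar>} w *\<^sub>R D w) \<longlonglongrightarrow> D w"
        proof (cases "w = 0")
          case True then show ?thesis by (simp add: D0)
        next
          case False
          have "eventually (\<lambda>n. S n < \<bar>w\<bar>) sequentially"
            using order_tendstoD(2)[OF Sl, of "\<bar>w\<bar>"] False by simp
          then have "eventually (\<lambda>n. indicator {w. S n \<le> \<bar>w\<bar>} w *\<^sub>R D w = D w) sequentially"
            by eventually_elim simp
          then show ?thesis by (rule tendsto_eventually)
        qed
      qed
    qed
  qed (simp)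
  have lim: "((\<lambda>\<epsilon>. LINT w:{w. \<epsilon> \<le> \<bar>w\<bar>}|lborel. fhat w * ker_exp Lam H w x y $ i $ j)
      \<longlongrightarrow> \<delta> * complex_of_real (2 * pi * f 0) + integral\<^sup>L lborel D) (at_right 0)"
  proof -
    have L: "((\<lambda>\<epsilon>. \<delta> * (LINT w:{w. \<epsilon> \<le> \<bar>w\<bar>}|lborel. fhat w * exp (\<i> * complex_of_real (w * 0))) + (LINT w:{w. \<epsilon> \<le> \<bar>w\<bar>}|lborel. D w))
      \<longlongrightarrow> \<delta> * complex_of_real (2 * pi * f 0) + integral\<^sup>L lborel D) (at_right 0)"
      by (rule tendsto_add[OF lim1 lim2])
    moreover have ev: "eventually (\<lambda>\<epsilon>. \<delta> * (LINT w:{w. \<epsilon> \<le> \<bar>w\<bar>}|lborel. fhat w * exp (\<i> * complex_of_real (w * 0))) + (LINT w:{w. \<epsilon> \<le> \<bar>w\<bar>}|lborel. D w)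
        = (LINT w:{w. \<epsilon> \<le> \<bar>w\<bar>}|lborel. fhat w * ker_exp Lam H w x y $ i $ j)) (at_right 0)"
      using eventually_at_right_less[of 0] by eventually_elim (simp add: split)
    ultimately show ?thesis using tendsto_cong[OF ev] by simp
  qed
  have pv: "pv_integral (\<lambda>w. fhat w * ker_exp Lam H w x y $ i $ j) = \<delta> * complex_of_real (2 * pi * f 0) + integral\<^sup>L lborel D"
    unfolding pv_integral_def by (rule tendsto_Lim[OF trivial_limit_at_right_real lim])
  have "weyl_calc fhat Lam H x y $ i $ j = (\<delta> * complex_of_real (2 * pi * f 0) + integral\<^sup>L lborel D) / complex_of_real (2 * pi)"
    by (simp add: weyl_calc_def pv)
  also have "cmod \<dots> \<le> (cmod \<delta> * (2 * pi * \<bar>f 0\<bar>) + 2 * R) / (2 * pi)"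
  proof -
    have "cmod (\<delta> * complex_of_real (2 * pi * f 0) + integral\<^sup>L lborel D) \<le> cmod \<delta> * (2 * pi * \<bar>f 0\<bar>) + 2 * R"
      by (rule order_trans[OF norm_triangle_ineq add_mono[OF _ DI]]) (simp add: norm_mult abs_mult)
    then show ?thesis by (simp add: norm_divide divide_right_mono)
  qed
  also have "\<dots> = cmod \<delta> * \<bar>f 0\<bar> + R / pi" by (simp add: field_simps)
  also have "\<dots> = (if x = y \<and> i = j then \<bar>f 0\<bar> else 0) + C\<beta> * (K / \<beta> + a) * exp (- a / max 1 (K / \<beta>))"
    by (simp add: \<delta>v R_def)
  finally show ?thesis .
qed

end

theorem proposition2:
  fixes Lam :: "int set" and H :: "int \<Rightarrow> int \<Rightarrow> block"
    and f :: "real \<Rightarrow> real" and fhat :: "real \<Rightarrow> complex"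
    and d Kd \<beta> C\<beta> :: real and x y :: int
  assumes Lam: "(\<exists>L::int. L > 0 \<and> Lam = {0..<L}) \<or> Lam = UNIV"
    and selfadj: "\<forall>x\<in>Lam. \<forall>x'\<in>Lam. H x' x = blk_adj (H x x')"
    and d_pos: "d > 0" and Kd_pos: "Kd > 0"
    and decay_summable: "\<forall>x\<in>Lam. (\<lambda>x'. blk_norm (H x x') * exp (real_of_int \<bar>x - x'\<bar> / d)) summable_on Lam"
    and decay: "\<forall>x\<in>Lam. (\<Sum>\<^sub>\<infinity>x'\<in>Lam. blk_norm (H x x') * exp (real_of_int \<bar>x - x'\<bar> / d)) \<le> Kd"
    and f_bdd: "bounded (range f)"
    and fhat_meas: "fhat \<in> borel_measurable borel"
    and fourier: "\<forall>E. ((\<lambda>\<epsilon>. LINT w:{w. \<epsilon> \<le> \<bar>w\<bar>}|lborel. fhat w * exp (\<i> * complex_of_real (w * E)))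
                       \<longlongrightarrow> complex_of_real (2 * pi * f E)) (at_right 0)"
    and \<beta>_pos: "\<beta> > 0" and C\<beta>_pos: "C\<beta> > 0"
    and fhat_decay: "\<forall>w. cmod (fhat w * complex_of_real w) \<le> C\<beta> * exp (- \<beta> * \<bar>w\<bar>)"
    and x: "x \<in> Lam" and y: "y \<in> Lam"
  shows "blk_norm (weyl_calc fhat Lam H x y)
     \<le> 4 * ((SUP E. \<bar>f E\<bar>) + C\<beta> * Kd / \<beta> + C\<beta> * real_of_int \<bar>x - y\<bar> / d)
         * exp (- real_of_int \<bar>x - y\<bar> / (d * max 1 (Kd / \<beta>)))"
proof -
  interpret fsetting Lam H d Kd f fhat \<beta> C\<beta>
    by (intro fsetting.intro setting.intro fsetting_axioms.intro selfadj d_pos Kd_pos decay_summable decay fhat_meas fourier \<beta>_pos C\<beta>_pos fhat_decay)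
  define a where "a = real_of_int \<bar>x - y\<bar> / d"
  have a0: "a \<ge> 0" unfolding a_def using d_pos by simp
  define F where "F = (SUP E. \<bar>f E\<bar>)"
  have bdd: "bdd_above (range (\<lambda>E. \<bar>f E\<bar>))"
  proof -
    obtain B where "\<forall>z\<in>range f. norm z \<le> B" using f_bdd unfolding bounded_iff by blast
    then have "\<And>E. \<bar>f E\<bar> \<le> B" by auto
    then show ?thesis by (rule bdd_aboveI2)
  qed
  have f0: "\<bar>f 0\<bar> \<le> F" unfolding F_def by (rule cSUP_upper[OF UNIV_I bdd])
  have F0: "0 \<le> F" using f0 by linarith
  define m where "m = max 1 (Kd / \<beta>)"
  have m1: "m \<ge> 1" unfolding m_def by simp
  define c where "c = C\<beta> * (Kd / \<beta> + a) * exp (- a / m)"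
  have c0: "c \<ge> 0" unfolding c_def using C\<beta>_pos Kd_pos \<beta>_pos a0 by simp
  have eb: "cmod (weyl_calc fhat Lam H x y $ i $ j) \<le> (if x = y \<and> i = j then \<bar>f 0\<bar> else 0) + c" for i j
    using entry_bound[OF x y, of i j] unfolding c_def a_def m_def .
  have s1: "(\<Sum>j\<in>(UNIV::2 set). (if x = y \<and> i = j then \<bar>f 0\<bar> else 0) + c) = (if x = y then \<bar>f 0\<bar> else 0) + 2 * c" for i :: 2
  proof (cases "x = y")
    case True
    then show ?thesis by (simp add: sum.distrib)
  next
    case False
    then show ?thesis by simp
  qed
  have "blk_norm (weyl_calc fhat Lam H x y) \<le> (\<Sum>i\<in>UNIV. \<Sum>j\<in>UNIV. cmod (weyl_calc fhat Lam H x y $ i $ j))"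
    by (rule blk_norm_le_entries)
  also have "\<dots> \<le> (\<Sum>i\<in>(UNIV::2 set). \<Sum>j\<in>(UNIV::2 set). (if x = y \<and> i = j then \<bar>f 0\<bar> else 0) + c)"
    by (intro sum_mono eb)
  also have "\<dots> = (\<Sum>i\<in>(UNIV::2 set). (if x = y then \<bar>f 0\<bar> else 0) + 2 * c)"
    by (intro sum.cong refl s1)
  also have "\<dots> = (if x = y then 2 * \<bar>f 0\<bar> else 0) + 4 * c"
    by simp
  also have "\<dots> \<le> 4 * (F + C\<beta> * Kd / \<beta> + C\<beta> * real_of_int \<bar>x - y\<bar> / d) * exp (- a / m)"
  proof (cases "x = y")
    case True
    then have "a = 0" unfolding a_def by simp
    then have "c = C\<beta> * Kd / \<beta>" unfolding c_def by simp
    then show ?thesis using True f0 F0 \<open>a = 0\<close> by simp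
  next
    case False
    have "4 * c = 4 * (C\<beta> * Kd / \<beta> + C\<beta> * real_of_int \<bar>x - y\<bar> / d) * exp (- a / m)"
      unfolding c_def a_def by (simp add: algebra_simps)
    also have "\<dots> \<le> 4 * (F + C\<beta> * Kd / \<beta> + C\<beta> * real_of_int \<bar>x - y\<bar> / d) * exp (- a / m)"
      using F0 by (intro mult_right_mono mult_left_mono) auto
    finally show ?thesis using False by simp
  qed
  also have "exp (- a / m) = exp (- real_of_int \<bar>x - y\<bar> / (d * max 1 (Kd / \<beta>)))"
    unfolding a_def m_def by simp
  finally show ?thesis unfolding F_def .
qed


end
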